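(* Let $\ell\ge 0$ be an integer and let $A$ be the operator on $L^2(0,1)$ given by $Aw = w^{(2\ell+1)}$ with domain $D(A)=\{w\in H^{2\ell+1}(0,1) : w^{(k)}(0)=w^{(k)}(1) \text{ for all } k=0,\dots,2\ell\}$. Then: (a) there is $\varepsilon>0$ such that $(0,\varepsilon)\subseteq\rho(A)$ and $R(\mu,A)\succeq \mathbb{1}\otimes\mathbb{1}$ for all $\mu\in(0,\varepsilon)$; (b) there is $\varepsilon>0$ such that $(-\varepsilon,0)\subseteq\rho(A)$ and $R(\mu,A)\preceq -\mathbb{1}\otimes\mathbb{1}$ for all $\mu\in(-\varepsilon,0)$. If $\ell=0$, assertion (a) holds for all $\mu\in(0,\infty)$ and assertion (b) holds for all $\mu\in(-\infty,0)$.
   Context: $\mathbb{1}$ is the constant function $1$ on $(0,1)$ and $\mathbb{1}\otimes\mathbb{1}$ is the operator $f\mapsto \big(\int_0^1 f(y)\,dy\big)\mathbb{1}$ on $L^2(0,1)$. $R(\mu,A)=(\mu-A)^{-1}$. For bounded real operators $T,S$ on $L^2(0,1)$, $T\succeq S$ (equivalently $S \preceq T$) means there is $c>0$ such that $T-cS$ maps nonnegative functions to nonnegative functions. *)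

theory Defs
  imports "HOL-Analysis.Analysis"
begin

text \<open>All function spaces are over the real scalar field on the interval (0,1);
  elements of L2(0,1) are represented by functions real => real, identified
  almost everywhere on [0,1] (the endpoints form a null set).\<close>

definition L2 :: "(real \<Rightarrow> real) \<Rightarrow> bool" where
  "L2 f \<longleftrightarrow> f \<in> borel_measurable (lebesgue_on {0..1}) \<and>
     integrable (lebesgue_on {0..1}) (\<lambda>x. (f x)^2)"

definition L2norm :: "(real \<Rightarrow> real) \<Rightarrow> real" where
  "L2norm f = sqrt (integral\<^sup>L (lebesgue_on {0..1}) (\<lambda>x. (f x)^2))"

text \<open>Sobolev space H^m(0,1) (one-dimensional): w has derivatives d 0 = w, d 1, ..., d m,
  where d k (k < m) is the absolutely continuous representative,
  d k x = d k 0 + int_0^x d (k+1), and d m is in L2(0,1).\<close>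

definition sob_rep :: "nat \<Rightarrow> (real \<Rightarrow> real) \<Rightarrow> (nat \<Rightarrow> real \<Rightarrow> real) \<Rightarrow> bool" where
  "sob_rep m w d \<longleftrightarrow> d 0 = w \<and>
     (\<forall>k<m. integrable (lebesgue_on {0..1}) (d (Suc k)) \<and>
        (\<forall>x\<in>{0..1}. d k x = d k 0 + integral\<^sup>L (lebesgue_on {0..x}) (d (Suc k)))) \<and>
     L2 (d m)"

text \<open>Domain of A w = w^(2l+1): w in H^(2l+1)(0,1) with periodic boundary conditions
  w^(k)(0) = w^(k)(1) for k = 0..2l; d (2l+1) is A w.\<close>

definition domA :: "nat \<Rightarrow> (real \<Rightarrow> real) \<Rightarrow> (nat \<Rightarrow> real \<Rightarrow> real) \<Rightarrow> bool" where
  "domA l w d \<longleftrightarrow> sob_rep (2*l+1) w d \<and> (\<forall>k\<le>2*l. d k 0 = d k 1)"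

definition res_eq :: "nat \<Rightarrow> real \<Rightarrow> (real \<Rightarrow> real) \<Rightarrow> (nat \<Rightarrow> real \<Rightarrow> real) \<Rightarrow> (real \<Rightarrow> real) \<Rightarrow> bool" where
  "res_eq l \<mu> w d f \<longleftrightarrow> domA l w d \<and>
     (AE x in lebesgue_on {0..1}. \<mu> * w x - d (2*l+1) x = f x)"

definition resolvent_set :: "nat \<Rightarrow> real set" where
  "resolvent_set l = {\<mu>.
     (\<forall>f. L2 f \<longrightarrow> (\<exists>w d. res_eq l \<mu> w d f)) \<and>
     (\<forall>w d. res_eq l \<mu> w d (\<lambda>_. 0) \<longrightarrow> (AE x in lebesgue_on {0..1}. w x = 0)) \<and>
     (\<exists>C. \<forall>f w d. L2 f \<and> res_eq l \<mu> w d f \<longrightarrow> L2norm w \<le> C * L2norm f)}"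

text \<open>The resolvent R(mu,A) f (meaningful for mu in the resolvent set and f in L2).\<close>

definition Res :: "nat \<Rightarrow> real \<Rightarrow> (real \<Rightarrow> real) \<Rightarrow> (real \<Rightarrow> real)" where
  "Res l \<mu> f = (SOME w. \<exists>d. res_eq l \<mu> w d f)"

definition one_tensor_one :: "(real \<Rightarrow> real) \<Rightarrow> (real \<Rightarrow> real)" where
  "one_tensor_one f = (\<lambda>x. integral\<^sup>L (lebesgue_on {0..1}) f)"

definition op_ge :: "((real \<Rightarrow> real) \<Rightarrow> (real \<Rightarrow> real)) \<Rightarrow> ((real \<Rightarrow> real) \<Rightarrow> (real \<Rightarrow> real)) \<Rightarrow> bool" where
  "op_ge T S \<longleftrightarrow> (\<exists>c>0. \<forall>f. L2 f \<and> (AE x in lebesgue_on {0..1}. f x \<ge> 0) \<longrightarrow>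
     (AE x in lebesgue_on {0..1}. T f x - c * S f x \<ge> 0))"

end

theory Submission
  imports Defs
begin
lemma meas01: "measure (lebesgue_on {0..1::real}) {0..1} = 1"
  by (simp add: measure_restrict_space)

lemma LI_iff: "(S::real set) \<in> sets lebesgue \<Longrightarrow> integrable (lebesgue_on S) (h::real\<Rightarrow>real) \<longleftrightarrow> set_integrable lebesgue S h"
  unfolding set_integrable_def using integrable_restrict_space[of S lebesgue h] by simp

lemma LI_sub:
  assumes "integrable (lebesgue_on {0..1}) (h::real\<Rightarrow>real)" "0 \<le> a" "b \<le> 1"
  shows "integrable (lebesgue_on {a..b}) h"
proof -
  have "set_integrable lebesgue {0..1} h" using assms(1) LI_iff[of "{0..1}" h] by simp
  then have "set_integrable lebesgue {a..b} h"
    by (rule set_integrable_subset) (use assms in auto)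
  then show ?thesis using LI_iff[of "{a..b}" h] by simp
qed

lemma Lint_HK:
  assumes "integrable (lebesgue_on {a..b}) (h::real\<Rightarrow>real)"
  shows "integral\<^sup>L (lebesgue_on {a..b}) h = integral {a..b} h" "h integrable_on {a..b}"
   apply (rule lebesgue_integral_eq_integral[OF assms]) apply simp
  apply (rule integrable_on_lebesgue_on[OF assms]) apply simp
  done

lemma Lint_0: "integrable (lebesgue_on {0..1}) (h::real\<Rightarrow>real) \<Longrightarrow> integral\<^sup>L (lebesgue_on {0..0}) h = 0"
  using Lint_HK[OF LI_sub[of h 0 0]] by simp

lemma cont_indef:
  assumes "integrable (lebesgue_on {0..1}) (h::real\<Rightarrow>real)"
  shows "continuous_on {0..1} (\<lambda>x. integral\<^sup>L (lebesgue_on {0..x}) h)"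
proof -
  have "continuous_on {0..1} (\<lambda>x. integral {0..x} h)"
    by (rule indefinite_integral_continuous_1) (rule Lint_HK(2)[OF assms])
  moreover have "\<And>x. x \<in> {0..1} \<Longrightarrow> integral {0..x} h = integral\<^sup>L (lebesgue_on {0..x}) h"
  proof -
    fix x :: real assume "x \<in> {0..1}"
    then have "integrable (lebesgue_on {0..x}) h" using LI_sub[OF assms, of 0 x] by simp
    then show "integral {0..x} h = integral\<^sup>L (lebesgue_on {0..x}) h" using Lint_HK(1) by simp
  qed
  ultimately show ?thesis by (rule continuous_on_eq)
qed

lemma cont_LI:
  assumes "continuous_on {a..b} (g::real\<Rightarrow>real)"
  shows "integrable (lebesgue_on {a..b}) g"
  by (rule absolutely_integrable_imp_integrable[OF absolutely_integrable_continuous_real[OF assms]]) simp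

lemma abs_bound:
  assumes "integrable (lebesgue_on {0..1}) (h::real\<Rightarrow>real)" "x \<in> {0..1}"
  shows "\<bar>integral\<^sup>L (lebesgue_on {0..x}) h\<bar> \<le> integral\<^sup>L (lebesgue_on {0..1}) (\<lambda>y. \<bar>h y\<bar>)"
proof -
  have "\<bar>integral\<^sup>L (lebesgue_on {0..x}) h\<bar> \<le> integral\<^sup>L (lebesgue_on {0..x}) (\<lambda>y. \<bar>h y\<bar>)"
    by (rule integral_abs_bound)
  also have "\<dots> \<le> integral\<^sup>L (lebesgue_on {0..1}) (\<lambda>y. \<bar>h y\<bar>)"
  proof (rule integral_mono_lebesgue_on_AE)
    show "integrable (lebesgue_on {0..1}) (\<lambda>y. \<bar>h y\<bar>)" using assms(1) by (rule integrable_abs)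
    show "AE y in lebesgue_on {0..x}. \<bar>h y\<bar> \<le> \<bar>h y\<bar>" by simp
    show "AE y in lebesgue_on {0..1}. 0 \<le> \<bar>h y\<bar>" by simp
    show "{0..x} \<subseteq> {0..1}" using assms(2) by simp
  qed simp_all
  finally show ?thesis .
qed

lemma const_int: "integral\<^sup>L (lebesgue_on {0..1}) (\<lambda>y::real. B) = (B::real)"
  using meas01 by simp

lemma bound_int:
  assumes "integrable (lebesgue_on {0..1}) (g::real\<Rightarrow>real)" "\<And>x. x \<in> {0..1} \<Longrightarrow> \<bar>g x\<bar> \<le> B"
  shows "integral\<^sup>L (lebesgue_on {0..1}) (\<lambda>y. \<bar>g y\<bar>) \<le> B"
proof -
  have "integral\<^sup>L (lebesgue_on {0..1}) (\<lambda>y. \<bar>g y\<bar>) \<le> integral\<^sup>L (lebesgue_on {0..1}) (\<lambda>y::real. B)"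
  proof (rule Bochner_Integration.integral_mono)
    show "integrable (lebesgue_on {0..1}) (\<lambda>y. \<bar>g y\<bar>)" using assms(1) by (rule integrable_abs)
    show "integrable (lebesgue_on {0..1}) (\<lambda>y::real. B)"
      by (rule cont_LI) (rule continuous_on_const)
    show "\<And>x. x \<in> space (lebesgue_on {0..1}) \<Longrightarrow> \<bar>g x\<bar> \<le> B" using assms(2) by simp
  qed
  then show ?thesis by (simp only: const_int)
qed

abbreviation I01 :: "(real \<Rightarrow> real) \<Rightarrow> bool" where
  "I01 h \<equiv> integrable (lebesgue_on {0..1}) h"
abbreviation Lint :: "real \<Rightarrow> (real \<Rightarrow> real) \<Rightarrow> real" where
  "Lint x h \<equiv> integral\<^sup>L (lebesgue_on {0..x}) h"
abbreviation A1 :: "(real \<Rightarrow> real) \<Rightarrow> real" where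
  "A1 h \<equiv> integral\<^sup>L (lebesgue_on {0..1}) (\<lambda>y. \<bar>h y\<bar>)"

lemma I01_const: "I01 (\<lambda>x. c)"
  by (rule cont_LI) (rule continuous_on_const)

lemma abs_le_sq1: "\<bar>a::real\<bar> \<le> a^2 + 1"
proof -
  have "0 \<le> (\<bar>a\<bar> - 1)^2" by simp
  also have "(\<bar>a\<bar> - 1)^2 = a^2 - 2*\<bar>a\<bar> + 1" by (simp add: power2_eq_square algebra_simps)
  finally have "2*\<bar>a\<bar> \<le> a^2 + 1" by simp
  moreover have "0 \<le> a^2" by simp
  ultimately show ?thesis by linarith
qed

lemma L2_int: assumes "L2 f" shows "I01 f"
proof (rule Bochner_Integration.integrable_bound)
  have sq: "I01 (\<lambda>x. (f x)^2)" using assms unfolding L2_def by simp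
  show "I01 (\<lambda>x. (f x)^2 + 1)"
    by (rule Bochner_Integration.integrable_add[OF sq I01_const])
  show "f \<in> borel_measurable (lebesgue_on {0..1})" using assms unfolding L2_def by simp
  have "\<And>x. norm (f x) \<le> norm ((f x)^2 + 1)"
    using abs_le_sq1 by (metis abs_ge_self order_trans real_norm_def)
  then show "AE x in lebesgue_on {0..1}. norm (f x) \<le> norm ((f x)^2 + 1)" by simp
qed

lemma sqrt_trick:
  assumes Q: "Q \<ge> 0" and H: "\<And>t::real. t > 0 \<Longrightarrow> N \<le> (t * Q + 1/t) / 2"
  shows "N \<le> sqrt Q"
proof (cases "Q > 0")
  case True
  have s: "sqrt Q > 0" using True by simp
  have "N \<le> ((1/sqrt Q) * Q + 1/(1/sqrt Q)) / 2" using H[of "1/sqrt Q"] s by simp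
  also have "(1/sqrt Q) * Q = sqrt Q" using Q by (simp add: real_div_sqrt)
  finally show ?thesis by simp
next
  case False
  then have Q0: "Q = 0" using Q by simp
  show ?thesis
  proof (rule ccontr)
    assume "\<not> N \<le> sqrt Q"
    then have N: "N > 0" using Q0 by simp
    have "N \<le> (1/N * Q + 1/(1/N)) / 2" using H[of "1/N"] N by simp
    then show False using N Q0 by simp
  qed
qed

lemma L1_le_L2: assumes "L2 f" shows "A1 f \<le> L2norm f"
  unfolding L2norm_def
proof (rule sqrt_trick)
  have sq: "I01 (\<lambda>x. (f x)^2)" using assms unfolding L2_def by simp
  show "0 \<le> integral\<^sup>L (lebesgue_on {0..1}) (\<lambda>x. (f x)^2)" by (rule integral_nonneg_AE) simp
  fix t :: real assume t: "t > 0"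
  have int2: "I01 (\<lambda>x. t * (f x)^2 + 1/t)"
    by (rule Bochner_Integration.integrable_add[OF integrable_mult_right[OF sq] I01_const])
  have "A1 f \<le> integral\<^sup>L (lebesgue_on {0..1}) (\<lambda>x. (t * (f x)^2 + 1/t) / 2)"
  proof (rule Bochner_Integration.integral_mono)
    show "I01 (\<lambda>y. \<bar>f y\<bar>)" using L2_int[OF assms] by (rule integrable_abs)
    show "I01 (\<lambda>x. (t * (f x)^2 + 1/t) / 2)"
      using int2 by (rule integrable_divide)
    fix x
    have "0 \<le> (sqrt t * \<bar>f x\<bar> - 1 / sqrt t)^2" by simp
    also have "\<dots> = t * (f x)^2 + 1/t - 2 * \<bar>f x\<bar>" using t
      by (simp add: power2_diff power_mult_distrib power_divide)
    finally show "\<bar>f x\<bar> \<le> (t * (f x)^2 + 1/t) / 2" by simp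
  qed
  also have "\<dots> = (integral\<^sup>L (lebesgue_on {0..1}) (\<lambda>x. t * (f x)^2 + 1/t)) / 2"
    by simp
  also have "integral\<^sup>L (lebesgue_on {0..1}) (\<lambda>x. t * (f x)^2 + 1/t) = t * integral\<^sup>L (lebesgue_on {0..1}) (\<lambda>x. (f x)^2) + 1/t"
    using sq meas01 by (simp add: Bochner_Integration.integral_add[OF integrable_mult_right[OF sq] I01_const])
  finally show "A1 f \<le> (t * integral\<^sup>L (lebesgue_on {0..1}) (\<lambda>x. (f x)^2) + 1/t) / 2" .
qed

declare meas01[simp]

lemma mz_bound:
  assumes g: "I01 g" and h: "I01 h" and rel: "\<forall>x\<in>{0..1}. g x = g 0 + Lint x h"
    and mz: "Lint 1 g = 0" and x: "x \<in> {0..1}"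
  shows "\<bar>g x\<bar> \<le> 2 * A1 h"
proof -
  define H where "H = (\<lambda>x. Lint x h)"
  have IH: "I01 H"
  proof -
    have "I01 (\<lambda>x. g x - g 0)" by (rule Bochner_Integration.integrable_diff[OF g I01_const])
    moreover have "\<And>y::real. y \<in> space (lebesgue_on {0..1}) \<Longrightarrow> g y - g 0 = H y"
    proof -
      fix y :: real assume "y \<in> space (lebesgue_on {0..1})"
      then have "y \<in> {0..1}" by simp
      then have "g y = g 0 + Lint y h" using rel by blast
      then show "g y - g 0 = H y" unfolding H_def by simp
    qed
    ultimately show ?thesis using Bochner_Integration.integrable_cong[of "lebesgue_on {0..1}" "lebesgue_on {0..1}" "\<lambda>x. g x - g 0" H] by simp
  qed
  have "Lint 1 g = Lint 1 (\<lambda>x. g 0 + H x)"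
  proof (rule Bochner_Integration.integral_cong)
    fix y :: real assume "y \<in> space (lebesgue_on {0..1})"
    then have "y \<in> {0..1}" by simp
    then have "g y = g 0 + Lint y h" using rel by blast
    then show "g y = g 0 + H y" unfolding H_def by simp
  qed simp
  also have "\<dots> = g 0 + Lint 1 H"
    by (simp add: Bochner_Integration.integral_add[OF I01_const IH] const_int)
  finally have g0: "g 0 = - Lint 1 H" using mz by simp
  have "\<bar>Lint 1 H\<bar> \<le> A1 H" by (rule integral_abs_bound)
  also have "A1 H \<le> A1 h"
    by (rule bound_int[OF IH]) (simp add: H_def abs_bound[OF h])
  finally have a0: "\<bar>g 0\<bar> \<le> A1 h" using g0 by simp
  have "\<bar>H x\<bar> \<le> A1 h" unfolding H_def by (rule abs_bound[OF h x])
  moreover have "g x = g 0 + H x" using bspec[OF rel x] unfolding H_def .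
  ultimately show ?thesis using a0 by linarith
qed

lemma AE_sub:
  assumes "AE x in lebesgue_on {0..1}. P x" "0 \<le> a" "b \<le> (1::real)"
  shows "AE x in lebesgue_on {a..b}. P x"
proof -
  have "AE x in lebesgue. x \<in> {0..1} \<longrightarrow> P x"
    using assms(1) by (subst (asm) AE_restrict_space_iff) simp_all
  then have "AE x in lebesgue. x \<in> {a..b} \<longrightarrow> P x"
    by eventually_elim (use assms in auto)
  then show ?thesis by (subst AE_restrict_space_iff) simp_all
qed

lemma AE_all01: "(\<And>x. x \<in> {0..1} \<Longrightarrow> P x) \<Longrightarrow> AE x in lebesgue_on {0..1::real}. P x"
  by (rule AE_I2) simp

lemma A1_sub:
  assumes "I01 h" "x \<in> {0..1}"
  shows "Lint x (\<lambda>y. \<bar>h y\<bar>) \<le> A1 h"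
  by (rule integral_mono_lebesgue_on_AE) (use assms in \<open>simp_all add: integrable_abs\<close>)

lemma cont_rel:
  assumes h: "I01 h" and rel: "\<forall>y\<in>{0..1}. g y = g 0 + Lint y h"
  shows "continuous_on {0..1} g"
proof -
  have "continuous_on {0..1} (\<lambda>y. g 0 + Lint y h)"
    by (intro continuous_on_add continuous_on_const cont_indef[OF h])
  moreover have "\<And>y. y \<in> {0..1} \<Longrightarrow> g 0 + Lint y h = g y" using rel by (metis (no_types))
  ultimately show ?thesis by (rule continuous_on_eq)
qed

lemma apriori:
  fixes l :: nat and \<mu> :: real
  assumes n: "n = 2*l+1" and mu: "\<mu> \<noteq> 0" and q: "2^n * \<bar>\<mu>\<bar> \<le> 1/2"
    and f: "L2 f" and sol: "res_eq l \<mu> w d f" and x: "x \<in> {0..1}"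
  shows "\<bar>w x - Lint 1 f / \<mu>\<bar> \<le> 2^(n+1) * A1 (\<lambda>y. f y - Lint 1 f)"
proof -
  define m where "m = Lint 1 f"
  define F0 where "F0 = A1 (\<lambda>y. f y - m)"
  have dom: "domA l w d" and AEs: "AE y in lebesgue_on {0..1}. \<mu> * w y - d n y = f y"
    using sol n unfolding res_eq_def by auto
  have sob: "sob_rep n w d" and per: "\<forall>k\<le>2*l. d k 0 = d k 1"
    using dom n unfolding domA_def by auto
  have sobd: "d 0 = w \<and> (\<forall>k<n. I01 (d (Suc k)) \<and> (\<forall>y\<in>{0..1}. d k y = d k 0 + Lint y (d (Suc k)))) \<and> L2 (d n)"
    using sob unfolding sob_rep_def .
  have d0: "d 0 = w" using sobd by (rule conjunct1)
  have relall: "\<forall>k<n. I01 (d (Suc k)) \<and> (\<forall>y\<in>{0..1}. d k y = d k 0 + Lint y (d (Suc k)))"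
    using sobd by (rule conjunct1[OF conjunct2])
  have Id: "\<And>k. k < n \<Longrightarrow> I01 (d (Suc k))" using relall by blast
  have R: "\<And>k. k < n \<Longrightarrow> \<forall>y\<in>{0..1}. d k y = d k 0 + Lint y (d (Suc k))" using relall by blast
  have mz: "Lint 1 (d j) = 0" if j: "1 \<le> j" "j \<le> n" for j
  proof -
    obtain k where k: "j = Suc k" using j by (cases j) auto
    have "k < n" using j k by simp
    then have "d k 1 = d k 0 + Lint 1 (d (Suc k))" using bspec[OF R[of k], of 1] by simp
    then have "d k 1 = d k 0 + Lint 1 (d j)" using k by simp
    moreover have "d k 0 = d k 1" using per \<open>k < n\<close> n by auto
    ultimately show ?thesis by simp
  qed
  have n1: "0 < n" using n by simp
  have wc: "continuous_on {0..1} w"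
    using cont_rel[OF Id[OF n1] R[OF n1]] d0 by simp
  have Iw: "I01 w" using wc by (rule cont_LI)
  have If: "I01 f" using f by (rule L2_int)
  have Idn: "I01 (d n)" using Id[of "n - 1"] n1 by simp
  have Imf: "I01 (\<lambda>y. \<mu> * w y - f y)"
    by (rule Bochner_Integration.integrable_diff[OF integrable_mult_right[OF Iw] If])
  have AE': "AE y in lebesgue_on {0..1}. d n y = \<mu> * w y - f y"
    using AEs by eventually_elim simp
  have "Lint 1 (d n) = Lint 1 (\<lambda>y. \<mu> * w y - f y)"
    by (rule integral_cong_AE[OF borel_measurable_integrable[OF Idn] borel_measurable_integrable[OF Imf] AE'])
  also have "\<dots> = \<mu> * Lint 1 w - m"
    unfolding m_def by (simp add: Bochner_Integration.integral_diff[OF integrable_mult_right[OF Iw] If])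
  finally have "\<mu> * Lint 1 w - m = 0" using mz[of n] n1 by simp
  then have mw: "Lint 1 w = m / \<mu>" using mu by (simp add: field_simps)
  define w0 where "w0 = (\<lambda>y. w y - m / \<mu>)"
  have Iw0: "I01 w0" unfolding w0_def by (rule Bochner_Integration.integrable_diff[OF Iw I01_const])
  have mw0: "Lint 1 w0 = 0" unfolding w0_def
    by (simp add: Bochner_Integration.integral_diff[OF Iw I01_const] mw)
  have rel0: "\<forall>y\<in>{0..1}. w0 y = w0 0 + Lint y (d 1)"
  proof
    fix y :: real assume y: "y \<in> {0..1}"
    have "d 0 y = d 0 0 + Lint y (d 1)" using bspec[OF R[OF n1] y] by simp
    then show "w0 y = w0 0 + Lint y (d 1)" unfolding w0_def d0 by simp
  qed
  have bw0: "\<And>y. y \<in> {0..1} \<Longrightarrow> \<bar>w0 y\<bar> \<le> 2 * A1 (d 1)"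
    by (rule mz_bound[OF Iw0 _ rel0 mw0]) (use Id[OF n1] in simp)
  have step: "A1 (d j) \<le> 2 * A1 (d (Suc j))" if j: "1 \<le> j" "j < n" for j
  proof (rule bound_int)
    show "I01 (d j)" using Id[of "j - 1"] j by simp
    fix y :: real assume y: "y \<in> {0..1}"
    show "\<bar>d j y\<bar> \<le> 2 * A1 (d (Suc j))"
      by (rule mz_bound[OF \<open>I01 (d j)\<close> Id[OF j(2)] R[OF j(2)] mz y]) (use j in simp_all)
  qed
  have chain: "i < n \<longrightarrow> A1 (d (n - i)) \<le> 2^i * A1 (d n)" for i
  proof (induction i)
    case 0 then show ?case by simp
  next
    case (Suc i)
    show ?case
    proof
      assume i: "Suc i < n"
      have "A1 (d (n - Suc i)) \<le> 2 * A1 (d (Suc (n - Suc i)))"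
        by (rule step) (use i in simp_all)
      also have "Suc (n - Suc i) = n - i" using i by simp
      also have "2 * A1 (d (n - i)) \<le> 2 * (2^i * A1 (d n))" using Suc.IH i by simp
      finally show "A1 (d (n - Suc i)) \<le> 2 ^ Suc i * A1 (d n)" by simp
    qed
  qed
  have c1: "A1 (d 1) \<le> 2^(n-1) * A1 (d n)" using chain[of "n - 1"] n1 by simp
  have Ifm: "I01 (\<lambda>y. f y - m)" by (rule Bochner_Integration.integrable_diff[OF If I01_const])
  have Imaj: "I01 (\<lambda>y. \<bar>\<mu>\<bar> * \<bar>w0 y\<bar> + \<bar>f y - m\<bar>)"
    by (rule Bochner_Integration.integrable_add[OF integrable_mult_right[OF integrable_abs[OF Iw0]] integrable_abs[OF Ifm]])
  have "A1 (d n) \<le> Lint 1 (\<lambda>y. \<bar>\<mu>\<bar> * \<bar>w0 y\<bar> + \<bar>f y - m\<bar>)"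
  proof (rule integral_mono_AE)
    show "I01 (\<lambda>y. \<bar>d n y\<bar>)" using Idn by (rule integrable_abs)
    show "I01 (\<lambda>y. \<bar>\<mu>\<bar> * \<bar>w0 y\<bar> + \<bar>f y - m\<bar>)" by (rule Imaj)
    show "AE y in lebesgue_on {0..1}. \<bar>d n y\<bar> \<le> \<bar>\<mu>\<bar> * \<bar>w0 y\<bar> + \<bar>f y - m\<bar>"
      using AE'
    proof eventually_elim
      case (elim y)
      have "d n y = \<mu> * w0 y - (f y - m)" using elim mu unfolding w0_def by (simp add: algebra_simps)
      then show ?case by (simp add: abs_mult[symmetric])
    qed
  qed
  also have "\<dots> = \<bar>\<mu>\<bar> * A1 w0 + F0"
    unfolding F0_def by (simp add: Bochner_Integration.integral_add[OF integrable_mult_right[OF integrable_abs[OF Iw0]] integrable_abs[OF Ifm]])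
  finally have dn: "A1 (d n) \<le> \<bar>\<mu>\<bar> * A1 w0 + F0" .
  have pw: "\<bar>w0 y\<bar> \<le> 2^n * (\<bar>\<mu>\<bar> * A1 w0 + F0)" if y: "y \<in> {0..1}" for y
  proof -
    have "\<bar>w0 y\<bar> \<le> 2 * A1 (d 1)" by (rule bw0[OF y])
    also have "\<dots> \<le> 2 * (2^(n-1) * A1 (d n))" using c1 by simp
    also have "\<dots> = 2^n * A1 (d n)" using n1 by (cases n) simp_all
    also have "\<dots> \<le> 2^n * (\<bar>\<mu>\<bar> * A1 w0 + F0)" using dn by simp
    finally show ?thesis .
  qed
  have "A1 w0 \<le> 2^n * (\<bar>\<mu>\<bar> * A1 w0 + F0)" by (rule bound_int[OF Iw0 pw])
  moreover have "2^n * (\<bar>\<mu>\<bar> * A1 w0) \<le> (1/2) * A1 w0"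
    using mult_right_mono[OF q, of "A1 w0"] by (simp add: mult.assoc integral_nonneg_AE)
  ultimately have I: "A1 w0 \<le> 2^(n+1) * F0" by (simp add: algebra_simps)
  have "\<bar>w0 x\<bar> \<le> 2^n * (\<bar>\<mu>\<bar> * A1 w0 + F0)" by (rule pw[OF x])
  also have "\<dots> = 2^n * \<bar>\<mu>\<bar> * A1 w0 + 2^n * F0" by (simp add: algebra_simps)
  also have "2^n * \<bar>\<mu>\<bar> * A1 w0 \<le> (1/2) * A1 w0"
    using mult_right_mono[OF q, of "A1 w0"] by (simp add: integral_nonneg_AE)
  also have "(1/2) * A1 w0 \<le> (1/2) * (2^(n+1) * F0)" using I by simp
  finally have "\<bar>w0 x\<bar> \<le> 2^(n+1) * F0" by (simp add: algebra_simps)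
  then show ?thesis unfolding w0_def F0_def m_def .
qed

definition Vop :: "(real \<Rightarrow> real) \<Rightarrow> real \<Rightarrow> real" where
  "Vop h = (\<lambda>x. Lint x h - Lint 1 (\<lambda>s. Lint s h))"

lemma V_cont: "I01 h \<Longrightarrow> continuous_on {0..1} (Vop h)"
  unfolding Vop_def by (intro continuous_on_diff continuous_on_const cont_indef)

lemma V_I: "I01 h \<Longrightarrow> I01 (Vop h)"
  by (rule cont_LI) (rule V_cont)

lemma V_rel: assumes "I01 h" shows "\<forall>x\<in>{0..1}. Vop h x = Vop h 0 + Lint x h"
  using Lint_0[OF assms] unfolding Vop_def by simp

lemma V_mean: assumes h: "I01 h" shows "Lint 1 (Vop h) = 0"
proof -
  have Ic: "I01 (\<lambda>s. Lint s h)" by (rule cont_LI) (rule cont_indef[OF h])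
  show ?thesis unfolding Vop_def
    by (simp add: Bochner_Integration.integral_diff[OF Ic I01_const])
qed

lemma V_bound: assumes h: "I01 h" "x \<in> {0..1}" shows "\<bar>Vop h x\<bar> \<le> 2 * A1 h"
  by (rule mz_bound[OF V_I[OF h(1)] h(1) V_rel[OF h(1)] V_mean[OF h(1)] h(2)])

lemma V_per: assumes h: "I01 h" "Lint 1 h = 0" shows "Vop h 1 = Vop h 0"
  using bspec[OF V_rel[OF h(1)], of 1] h(2) by simp

primrec useq :: "(real \<Rightarrow> real) \<Rightarrow> nat \<Rightarrow> real \<Rightarrow> real" where
  "useq g 0 = g"
| "useq g (Suc i) = Vop (useq g i)"

context
  fixes g :: "real \<Rightarrow> real"
  assumes gI: "I01 g" and gm: "Lint 1 g = 0"
begin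

lemma u_I: "I01 (useq g i)"
  by (induction i) (simp_all add: gI V_I)

lemma u_A: "A1 (useq g i) \<le> 2^i * A1 g"
proof (induction i)
  case 0 then show ?case by simp
next
  case (Suc i)
  have "A1 (useq g (Suc i)) \<le> 2 * A1 (useq g i)"
    unfolding useq.simps by (rule bound_int[OF V_I[OF u_I]]) (rule V_bound[OF u_I])
  also have "\<dots> \<le> 2 * (2^i * A1 g)" using Suc.IH by simp
  finally show ?case by simp
qed

lemma u_b: assumes "x \<in> {0..1}" shows "\<bar>useq g (Suc i) x\<bar> \<le> 2^(Suc i) * A1 g"
proof -
  have "\<bar>useq g (Suc i) x\<bar> \<le> 2 * A1 (useq g i)"
    unfolding useq.simps by (rule V_bound[OF u_I assms])
  also have "\<dots> \<le> 2 * (2^i * A1 g)" using u_A[of i] by simp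
  finally show ?thesis by simp
qed

lemma u_m: "Lint 1 (useq g i) = 0"
  by (cases i) (simp_all add: gm V_mean u_I)

lemma u_per: "useq g (Suc i) 1 = useq g (Suc i) 0"
  unfolding useq.simps by (rule V_per[OF u_I u_m])

lemma u_rel: "\<forall>x\<in>{0..1}. useq g (Suc i) x = useq g (Suc i) 0 + Lint x (useq g i)"
  unfolding useq.simps by (rule V_rel[OF u_I])

end

declare useq.simps(2)[simp del]

definition Sser :: "(real \<Rightarrow> real) \<Rightarrow> real \<Rightarrow> nat \<Rightarrow> nat \<Rightarrow> real \<Rightarrow> real" where
  "Sser g \<mu> n r = (\<lambda>y. \<Sum>k. \<mu>^k * useq g (n*k + r) y)"

lemma geo: "summable (\<lambda>k. C * (1/2::real)^k)"
  by (rule summable_mult) (rule summable_geometric, simp)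

context
  fixes g :: "real \<Rightarrow> real" and \<mu> :: real and n :: nat
  assumes gI: "I01 g" and gm: "Lint 1 g = 0" and n1: "1 \<le> n" and q: "2^n * \<bar>\<mu>\<bar> \<le> 1/2"
begin

lemma qk: "\<bar>\<mu>\<bar>^k * 2^(n*k+r) \<le> 2^r * (1/2::real)^k"
proof -
  have e: "(2::real)^(n*k+r) = 2^r * (2^n)^k" by (simp add: power_add power_mult)
  have "\<bar>\<mu>\<bar>^k * 2^(n*k+r) = 2^r * ((2^n)^k * \<bar>\<mu>\<bar>^k)" by (simp add: e)
  also have "\<dots> = 2^r * (2^n * \<bar>\<mu>\<bar>)^k" by (simp add: power_mult_distrib)
  also have "(2^n * \<bar>\<mu>\<bar>)^k \<le> (1/2)^k" by (rule power_mono[OF q]) simp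
  finally show ?thesis by simp
qed

lemma tb:
  assumes kr: "1 \<le> n*k + r" and y: "y \<in> {0..1}"
  shows "\<bar>\<mu>^k * useq g (n*k+r) y\<bar> \<le> 2^r * A1 g * (1/2)^k"
proof -
  obtain j where j: "n*k + r = Suc j" using kr by (cases "n*k+r") auto
  have G: "0 \<le> A1 g" by (rule integral_nonneg_AE) simp
  have "\<bar>\<mu>^k * useq g (n*k+r) y\<bar> = \<bar>\<mu>\<bar>^k * \<bar>useq g (Suc j) y\<bar>" by (simp add: j abs_mult power_abs)
  also have "\<dots> \<le> \<bar>\<mu>\<bar>^k * (2^(Suc j) * A1 g)"
    by (rule mult_left_mono[OF u_b[OF gI gm y]]) simp
  also have "\<dots> = (\<bar>\<mu>\<bar>^k * 2^(n*k+r)) * A1 g" by (simp add: j)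
  also have "\<dots> \<le> (2^r * (1/2)^k) * A1 g" by (rule mult_right_mono[OF qk G])
  finally show ?thesis by (simp add: mult_ac)
qed

lemma ib: "A1 (\<lambda>y. \<mu>^k * useq g (n*k+r) y) \<le> 2^r * A1 g * (1/2)^k"
proof -
  have "A1 (\<lambda>y. \<mu>^k * useq g (n*k+r) y) = \<bar>\<mu>\<bar>^k * A1 (useq g (n*k+r))"
    by (simp add: abs_mult power_abs)
  also have "\<dots> \<le> \<bar>\<mu>\<bar>^k * (2^(n*k+r) * A1 g)"
    by (rule mult_left_mono[OF u_A[OF gI gm]]) simp
  also have "\<dots> = (\<bar>\<mu>\<bar>^k * 2^(n*k+r)) * A1 g" by simp
  also have "\<dots> \<le> (2^r * (1/2)^k) * A1 g"
    by (rule mult_right_mono[OF qk]) (rule integral_nonneg_AE, simp)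
  finally show ?thesis by (simp add: mult_ac)
qed

lemma spt: assumes y: "y \<in> {0..1}" shows "summable (\<lambda>k. \<bar>\<mu>^k * useq g (n*k + r) y\<bar>)"
proof (rule summable_comparison_test'[OF geo, of 1])
  fix k :: nat assume k: "1 \<le> k"
  have "1 \<le> n*k + r" using k n1 by (metis add_increasing2 le_add1 nat_mult_1 mult_le_mono order_trans zero_le)
  then show "norm \<bar>\<mu>^k * useq g (n*k + r) y\<bar> \<le> 2^r * A1 g * (1/2)^k"
    using tb[OF _ y] by simp
qed

lemma sint: "summable (\<lambda>k. Lint x (\<lambda>y. norm (\<mu>^k * useq g (n*k + r) y)))" if x: "x \<in> {0..1}"
proof (rule summable_comparison_test'[OF geo, of 0])
  fix k :: nat
  have "Lint x (\<lambda>y. norm (\<mu>^k * useq g (n*k + r) y)) \<le> A1 (\<lambda>y. \<mu>^k * useq g (n*k+r) y)"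
    unfolding real_norm_def by (rule A1_sub[OF integrable_mult_right[OF u_I[OF gI gm]] x])
  also have "\<dots> \<le> 2^r * A1 g * (1/2)^k" by (rule ib)
  finally have *: "Lint x (\<lambda>y. norm (\<mu>^k * useq g (n*k + r) y)) \<le> 2^r * A1 g * (1/2)^k" .
  have "0 \<le> Lint x (\<lambda>y. norm (\<mu>^k * useq g (n*k + r) y))" by (rule integral_nonneg_AE) simp
  then show "norm (Lint x (\<lambda>y. norm (\<mu>^k * useq g (n*k + r) y))) \<le> 2^r * A1 g * (1/2)^k"
    using * by simp
qed

lemma LIx: "x \<in> {0..1} \<Longrightarrow> integrable (lebesgue_on {0..x}) (\<lambda>y. \<mu>^k * useq g (n*k + r) y)"
  by (rule LI_sub[OF integrable_mult_right[OF u_I[OF gI gm]]]) simp_all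

lemma AEsum: "x \<in> {0..1} \<Longrightarrow> AE y in lebesgue_on {0..x}. summable (\<lambda>k. norm (\<mu>^k * useq g (n*k + r) y))"
  by (rule AE_I2) (simp add: spt)

lemma S_int: assumes x: "x \<in> {0..1}"
  shows "Lint x (Sser g \<mu> n r) = (\<Sum>k. Lint x (\<lambda>y. \<mu>^k * useq g (n*k + r) y))"
    and "summable (\<lambda>k. Lint x (\<lambda>y. \<mu>^k * useq g (n*k + r) y))"
    and "integrable (lebesgue_on {0..x}) (Sser g \<mu> n r)"
  unfolding Sser_def
  using integral_suminf[OF LIx[OF x] AEsum[OF x] sint[OF x]]
    summable_integral[OF LIx[OF x] AEsum[OF x] sint[OF x]]
    integrable_suminf[OF LIx[OF x] AEsum[OF x] sint[OF x]] by auto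

lemma S_I: "I01 (Sser g \<mu> n r)"
  using S_int(3)[of 1] by simp

lemma S_rel: assumes x: "x \<in> {0..1}"
  shows "Sser g \<mu> n (Suc r) x = Sser g \<mu> n (Suc r) 0 + Lint x (Sser g \<mu> n r)"
proof -
  have z0: "(0::real) \<in> {0..1}" by simp
  have trm: "\<mu>^k * useq g (n*k + Suc r) x = \<mu>^k * useq g (n*k + Suc r) 0 + Lint x (\<lambda>y. \<mu>^k * useq g (n*k + r) y)" for k
  proof -
    have "useq g (Suc (n*k + r)) x = useq g (Suc (n*k + r)) 0 + Lint x (useq g (n*k+r))"
      using bspec[OF u_rel[OF gI gm] x] .
    then show ?thesis by (simp add: algebra_simps)
  qed
  have s1: "summable (\<lambda>k. \<mu>^k * useq g (n*k + Suc r) 0)"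
    by (rule summable_norm_cancel) (use spt[OF z0, of "Suc r"] in \<open>simp del: add_Suc_right\<close>)
  have "Sser g \<mu> n (Suc r) x = (\<Sum>k. \<mu>^k * useq g (n*k + Suc r) 0 + Lint x (\<lambda>y. \<mu>^k * useq g (n*k + r) y))"
    unfolding Sser_def by (rule suminf_cong) (rule trm)
  also have "\<dots> = (\<Sum>k. \<mu>^k * useq g (n*k + Suc r) 0) + (\<Sum>k. Lint x (\<lambda>y. \<mu>^k * useq g (n*k + r) y))"
    by (rule suminf_add[OF s1 S_int(2)[OF x], symmetric])
  also have "\<dots> = Sser g \<mu> n (Suc r) 0 + Lint x (Sser g \<mu> n r)"
    unfolding S_int(1)[OF x] by (simp only: Sser_def)
  finally show ?thesis .
qed

lemma S_per: "Sser g \<mu> n (Suc r) 1 = Sser g \<mu> n (Suc r) 0"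
  unfolding Sser_def
proof (rule suminf_cong)
  fix k
  show "\<mu>^k * useq g (n*k + Suc r) 1 = \<mu>^k * useq g (n*k + Suc r) 0"
    using u_per[OF gI gm, of "n*k + r"] by simp
qed

lemma S_0: assumes y: "y \<in> {0..1}" shows "Sser g \<mu> n 0 y = g y + \<mu> * Sser g \<mu> n n y"
proof -
  let ?a = "\<lambda>k. \<mu>^k * useq g (n*k) y"
  have "summable (\<lambda>k. norm (?a k))" using spt[OF y, of 0] by simp
  then have sa: "summable ?a" by (rule summable_norm_cancel)
  have "summable (\<lambda>k. norm (\<mu>^k * useq g (n*k + n) y))" using spt[OF y, of n] by simp
  then have sb: "summable (\<lambda>k. \<mu>^k * useq g (n*k + n) y)" by (rule summable_norm_cancel)
  have "(\<Sum>k. ?a (Suc k)) = suminf ?a - ?a 0" by (rule suminf_split_head[OF sa])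
  moreover have "(\<Sum>k. ?a (Suc k)) = \<mu> * (\<Sum>k. \<mu>^k * useq g (n*k + n) y)"
  proof -
    have "(\<Sum>k. ?a (Suc k)) = (\<Sum>k. \<mu> * (\<mu>^k * useq g (n*k + n) y))"
      by (rule suminf_cong) (simp add: algebra_simps)
    also have "\<dots> = \<mu> * (\<Sum>k. \<mu>^k * useq g (n*k + n) y)" by (rule suminf_mult[OF sb])
    finally show ?thesis .
  qed
  ultimately show ?thesis unfolding Sser_def by simp
qed

lemma S_bound: assumes y: "y \<in> {0..1}" shows "\<bar>Sser g \<mu> n (Suc r) y\<bar> \<le> 2^(r+2) * A1 g"
proof -
  have sa: "summable (\<lambda>k. norm (\<mu>^k * useq g (n*k + Suc r) y))" using spt[OF y, of "Suc r"] by (simp del: add_Suc_right)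
  have "\<bar>Sser g \<mu> n (Suc r) y\<bar> \<le> (\<Sum>k. norm (\<mu>^k * useq g (n*k + Suc r) y))"
    unfolding Sser_def using summable_norm[OF sa] by simp
  also have "\<dots> \<le> (\<Sum>k. 2^(Suc r) * A1 g * (1/2)^k)"
  proof (rule suminf_le[OF _ sa geo])
    fix k
    have "1 \<le> n*k + Suc r" by simp
    from tb[OF this y] show "norm (\<mu>^k * useq g (n*k + Suc r) y) \<le> 2^(Suc r) * A1 g * (1/2)^k"
      by (simp del: add_Suc_right power_Suc)
  qed
  also have "\<dots> = 2^(Suc r) * A1 g * 2"
    by (simp add: suminf_mult summable_geometric suminf_geometric)
  finally show ?thesis by (simp add: power_add mult_ac)
qed

end

lemma sq_le: "\<bar>a\<bar> \<le> B \<Longrightarrow> (a - b)^2 \<le> 2*B^2 + 2*(b::real)^2"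
proof -
  assume a: "\<bar>a\<bar> \<le> B"
  have "\<bar>a\<bar>^2 \<le> B^2" by (rule power_mono[OF a abs_ge_zero])
  then have "a^2 \<le> B^2" by simp
  moreover have "(a - b)^2 \<le> 2*a^2 + 2*b^2"
  proof -
    have "0 \<le> (a + b)^2" by simp
    then show ?thesis by (simp add: power2_eq_square algebra_simps)
  qed
  ultimately show ?thesis by linarith
qed

lemma exist_small:
  fixes l :: nat and \<mu> :: real
  assumes n: "n = 2*l+1" and mu: "\<mu> \<noteq> 0" and q: "2^n * \<bar>\<mu>\<bar> \<le> 1/2" and f: "L2 f"
  shows "\<exists>w d. res_eq l \<mu> w d f"
proof -
  define m where "m = Lint 1 f"
  define g where "g = (\<lambda>y. f y - m)"
  have If: "I01 f" using f by (rule L2_int)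
  have gI: "I01 g" unfolding g_def by (rule Bochner_Integration.integrable_diff[OF If I01_const])
  have gm: "Lint 1 g = 0" unfolding g_def m_def
    by (simp add: Bochner_Integration.integral_diff[OF If I01_const])
  have n1: "1 \<le> n" using n by simp
  define S where "S = Sser g \<mu> n"
  have SI: "\<And>r. I01 (S r)" unfolding S_def by (rule S_I[OF gI gm n1 q])
  have Srel: "\<And>r x. x \<in> {0..1} \<Longrightarrow> S (Suc r) x = S (Suc r) 0 + Lint x (S r)"
    unfolding S_def by (rule S_rel[OF gI gm n1 q])
  have Sper: "\<And>r. S (Suc r) 1 = S (Suc r) 0"
    unfolding S_def by (rule S_per[OF gI gm n1 q])
  have S0: "\<And>y. y \<in> {0..1} \<Longrightarrow> S 0 y = g y + \<mu> * S n y"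
    unfolding S_def by (rule S_0[OF gI gm n1 q])
  have Sb: "\<And>r y. y \<in> {0..1} \<Longrightarrow> \<bar>S (Suc r) y\<bar> \<le> 2^(r+2) * A1 g"
    unfolding S_def by (rule S_bound[OF gI gm n1 q])
  obtain p where p: "n = Suc p" using n1 by (cases n) auto
  define w where "w = (\<lambda>x. m/\<mu> - S n x)"
  define d where "d = (\<lambda>j. if j = 0 then w else if j < n then (\<lambda>x. - S (n-j) x) else (\<lambda>x. \<mu> * w x - f x))"
  have Iw: "I01 w" unfolding w_def by (rule Bochner_Integration.integrable_diff[OF I01_const SI])
  have dn: "d n = (\<lambda>x. \<mu> * w x - f x)" unfolding d_def using n1 by simp
  have Idn: "I01 (d n)" unfolding dn
    by (rule Bochner_Integration.integrable_diff[OF integrable_mult_right[OF Iw] If])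
  have dS: "d j = (\<lambda>x. - S (n-j) x)" if "0 < j" "j < n" for j unfolding d_def using that by simp
  have Id: "I01 (d (Suc k))" if k: "k < n" for k
  proof (cases "Suc k < n")
    case True
    have "d (Suc k) = (\<lambda>x. - S (n - Suc k) x)" by (rule dS) (use True in simp_all)
    then show ?thesis by (simp add: SI)
  next
    case False
    then have "Suc k = n" using k by simp
    then show ?thesis using Idn by simp
  qed
  have key: "Lint x (S 0) = - Lint x (d n)" if x: "x \<in> {0..1}" for x
  proof -
    have "Lint x (S 0) = Lint x (\<lambda>y. - (\<mu> * w y - f y))"
    proof (rule Bochner_Integration.integral_cong[OF refl])
      fix y assume "y \<in> space (lebesgue_on {0..x})"
      then have y: "y \<in> {0..1}" using x by simp
      show "S 0 y = - (\<mu> * w y - f y)" unfolding S0[OF y] w_def g_def using mu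
        by (simp add: algebra_simps)
    qed
    also have "\<dots> = - Lint x (d n)" unfolding dn by (rule Bochner_Integration.integral_minus)
    finally show ?thesis .
  qed
  have R: "d k y = d k 0 + Lint y (d (Suc k))" if k: "k < n" and y: "y \<in> {0..1}" for k y
  proof (cases "Suc k < n")
    case True
    have e: "n - k = Suc (n - Suc k)" using True by simp
    have sr: "S (n - k) y = S (n - k) 0 + Lint y (S (n - Suc k))"
      unfolding e by (rule Srel[OF y])
    have dk: "d (Suc k) = (\<lambda>x. - S (n - Suc k) x)" by (rule dS) (use True in simp_all)
    show ?thesis
    proof (cases "k = 0")
      case True
      have "d k y = m/\<mu> - S n y" using True unfolding d_def w_def by simp
      moreover have "d k 0 = m/\<mu> - S n 0" using True unfolding d_def w_def by simp
      ultimately show ?thesis using sr True unfolding dk by simp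
    next
      case False
      have "d k = (\<lambda>x. - S (n-k) x)" by (rule dS) (use False k in simp_all)
      then show ?thesis using sr unfolding dk by simp
    qed
  next
    case False
    then have kn: "Suc k = n" using k by simp
    have sr: "S 1 y = S 1 0 + Lint y (S 0)" using Srel[OF y, of 0] by simp
    have dk: "d k = (\<lambda>x. (if k = 0 then m/\<mu> else 0) - S 1 x)"
    proof (cases "k = 0")
      case True
      then have "n = 1" using kn by simp
      then show ?thesis unfolding d_def w_def using True by simp
    next
      case False
      then have "d k = (\<lambda>x. - S (n-k) x)" by (intro dS) (use k in simp_all)
      moreover have "n - k = 1" using kn by simp
      ultimately show ?thesis using False by simp
    qed
    show ?thesis unfolding dk kn using sr key[OF y] by simp
  qed
  have B: "\<bar>\<mu> * w x\<bar> \<le> \<bar>m\<bar> + \<bar>\<mu>\<bar> * (2^(p+2) * A1 g)" if x: "x \<in> {0..1}" for x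
  proof -
    have "\<mu> * w x = m - \<mu> * S n x" unfolding w_def using mu by (simp add: algebra_simps)
    moreover have "\<bar>S n x\<bar> \<le> 2^(p+2) * A1 g" unfolding p by (rule Sb[OF x])
    moreover have "\<bar>m - \<mu> * S n x\<bar> \<le> \<bar>m\<bar> + \<bar>\<mu> * S n x\<bar>" by (rule abs_triangle_ineq4)
    moreover have "\<bar>\<mu> * S n x\<bar> \<le> \<bar>\<mu>\<bar> * (2^(p+2) * A1 g)"
      unfolding abs_mult by (rule mult_left_mono) (use calculation(2) in simp_all)
    ultimately show ?thesis by linarith
  qed
  define BB where "BB = \<bar>m\<bar> + \<bar>\<mu>\<bar> * (2^(p+2) * A1 g)"
  have L2dn: "L2 (d n)" unfolding L2_def
  proof
    show "d n \<in> borel_measurable (lebesgue_on {0..1})" by (rule borel_measurable_integrable[OF Idn])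
    show "integrable (lebesgue_on {0..1}) (\<lambda>x. (d n x)^2)"
    proof (rule Bochner_Integration.integrable_bound)
      have sq: "I01 (\<lambda>x. (f x)^2)" using f unfolding L2_def by simp
      show "I01 (\<lambda>x. 2*BB^2 + 2*(f x)^2)"
        by (rule Bochner_Integration.integrable_add[OF I01_const integrable_mult_right[OF sq]])
      show "(\<lambda>x. (d n x)^2) \<in> borel_measurable (lebesgue_on {0..1})"
        by (rule borel_measurable_power[OF borel_measurable_integrable[OF Idn]])
      show "AE x in lebesgue_on {0..1}. norm ((d n x)^2) \<le> norm (2*BB^2 + 2*(f x)^2)"
      proof (rule AE_I2)
        fix x :: real assume "x \<in> space (lebesgue_on {0..1})"
        then have x: "x \<in> {0..1}" by simp
        have "(d n x)^2 \<le> 2*BB^2 + 2*(f x)^2" unfolding dn BB_def by (rule sq_le[OF B[OF x]])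
        then show "norm ((d n x)^2) \<le> norm (2*BB^2 + 2*(f x)^2)" by simp
      qed
    qed
  qed
  have per: "d k 0 = d k 1" if k: "k \<le> 2*l" for k
  proof (cases "k = 0")
    case True
    show ?thesis unfolding True d_def w_def p using Sper[of p] by simp
  next
    case False
    have kn: "k < n" using k n by simp
    have e: "n - k = Suc (n - Suc k)" using kn by simp
    have dk: "d k = (\<lambda>x. - S (n-k) x)" by (rule dS) (use False kn in simp_all)
    show ?thesis unfolding dk e using Sper[of "n - Suc k"] by simp
  qed
  have "res_eq l \<mu> w d f"
    unfolding res_eq_def domA_def sob_rep_def n[symmetric]
  proof (intro conjI allI impI ballI)
    show "d 0 = w" unfolding d_def by simp
    fix k assume "k < n" then show "I01 (d (Suc k))" by (rule Id)
  next
    fix k and y :: real assume "k < n" "y \<in> {0..1}" then show "d k y = d k 0 + Lint y (d (Suc k))" by (rule R)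
  next
    show "L2 (d n)" by (rule L2dn)
  next
    fix k assume "k \<le> 2*l" then show "d k 0 = d k 1" by (rule per)
  next
    show "AE x in lebesgue_on {0..1}. \<mu> * w x - d n x = f x" unfolding dn by simp
  qed
  then show ?thesis by blast
qed

lemma sol_cont:
  assumes sol: "res_eq l \<mu> w d f"
  shows "continuous_on {0..1} w"
proof -
  have "sob_rep (2*l+1) w d" using sol unfolding res_eq_def domA_def by simp
  then have sobd: "d 0 = w \<and> (\<forall>k<2*l+1. I01 (d (Suc k)) \<and> (\<forall>y\<in>{0..1}. d k y = d k 0 + Lint y (d (Suc k)))) \<and> L2 (d (2*l+1))"
    unfolding sob_rep_def .
  then have d0: "d 0 = w" and r: "\<forall>k<2*l+1. I01 (d (Suc k)) \<and> (\<forall>y\<in>{0..1}. d k y = d k 0 + Lint y (d (Suc k)))"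
    by blast+
  have z: "0 < 2*l+1" by simp
  have c: "I01 (d (Suc 0)) \<and> (\<forall>y\<in>{0..1}. d 0 y = d 0 0 + Lint y (d (Suc 0)))" by (rule mp[OF spec[OF r, of 0] z])
  have "continuous_on {0..1} (d 0)" by (rule cont_rel[OF conjunct1[OF c] conjunct2[OF c]])
  then show ?thesis using d0 by simp
qed

lemma L2_zero: "L2 (\<lambda>_. 0)"
  unfolding L2_def by simp

lemma A1_shift: assumes "I01 f" shows "A1 (\<lambda>y. f y - c) \<le> A1 f + \<bar>c\<bar>"
proof -
  have "A1 (\<lambda>y. f y - c) \<le> Lint 1 (\<lambda>y. \<bar>f y\<bar> + \<bar>c\<bar>)"
  proof (rule Bochner_Integration.integral_mono)
    show "I01 (\<lambda>y. \<bar>f y - c\<bar>)" by (rule integrable_abs[OF Bochner_Integration.integrable_diff[OF assms I01_const]])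
    show "I01 (\<lambda>y. \<bar>f y\<bar> + \<bar>c\<bar>)" by (rule Bochner_Integration.integrable_add[OF integrable_abs[OF assms] I01_const])
    fix y show "\<bar>f y - c\<bar> \<le> \<bar>f y\<bar> + \<bar>c\<bar>" by (rule abs_triangle_ineq4)
  qed
  also have "\<dots> = A1 f + \<bar>c\<bar>"
    by (simp add: Bochner_Integration.integral_add[OF integrable_abs[OF assms] I01_const])
  finally show ?thesis .
qed

lemma small_res:
  fixes l :: nat and \<mu> :: real
  assumes n: "n = 2*l+1" and mu: "\<mu> \<noteq> 0" and e: "\<bar>\<mu>\<bar> < 1/2^(n+3)"
  shows "\<mu> \<in> resolvent_set l"
proof -
  have q: "2^n * \<bar>\<mu>\<bar> \<le> 1/2"
  proof -
    have "2^n * \<bar>\<mu>\<bar> \<le> 2^n * (1/2^(n+3))" by (rule mult_left_mono) (use e in simp_all)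
    also have "\<dots> = 1/8" by (simp add: power_add)
    finally show ?thesis by simp
  qed
  define C where "C = 1/\<bar>\<mu>\<bar> + 2^(n+2)"
  have bound: "L2norm w \<le> C * L2norm f" if f: "L2 f" and sol: "res_eq l \<mu> w d f" for f w d
  proof -
    define m where "m = Lint 1 f"
    have If: "I01 f" using f by (rule L2_int)
    have mA: "\<bar>m\<bar> \<le> A1 f" unfolding m_def by (rule integral_abs_bound)
    have A1f: "A1 f \<le> L2norm f" using f by (rule L1_le_L2)
    have C0: "0 \<le> C" unfolding C_def by simp
    have pt: "\<bar>w x\<bar> \<le> C * L2norm f" if x: "x \<in> {0..1}" for x
    proof -
      have "\<bar>w x - m / \<mu>\<bar> \<le> 2^(n+1) * A1 (\<lambda>y. f y - m)"
        unfolding m_def by (rule apriori[OF n mu q f sol x])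
      also have "\<dots> \<le> 2^(n+1) * (A1 f + \<bar>m\<bar>)" using A1_shift[OF If, of m] by simp
      also have "\<dots> \<le> 2^(n+1) * (2 * A1 f)" using mA by simp
      finally have a: "\<bar>w x - m / \<mu>\<bar> \<le> 2^(n+2) * A1 f" by simp
      have b: "\<bar>m / \<mu>\<bar> \<le> A1 f / \<bar>\<mu>\<bar>" using mA mu by (simp add: divide_right_mono)
      have "\<bar>w x\<bar> \<le> \<bar>w x - m / \<mu>\<bar> + \<bar>m / \<mu>\<bar>" by linarith
      also have "\<dots> \<le> C * A1 f" using a b unfolding C_def by (simp add: algebra_simps)
      also have "\<dots> \<le> C * L2norm f" by (rule mult_left_mono[OF A1f C0])
      finally show ?thesis .
    qed
    have wc: "continuous_on {0..1} w" by (rule sol_cont[OF sol])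
    have Iw2: "I01 (\<lambda>x. (w x)^2)" by (rule cont_LI) (intro continuous_on_power wc)
    have K0: "0 \<le> C * L2norm f" using pt[of 0] by simp
    have "Lint 1 (\<lambda>x. (w x)^2) \<le> Lint 1 (\<lambda>x. \<bar>(w x)^2\<bar>)" by simp
    also have "\<dots> \<le> (C * L2norm f)^2"
    proof (rule bound_int[OF Iw2])
      fix x :: real assume x: "x \<in> {0..1}"
      have "\<bar>w x\<bar>^2 \<le> (C * L2norm f)^2" by (rule power_mono[OF pt[OF x] abs_ge_zero])
      then show "\<bar>(w x)^2\<bar> \<le> (C * L2norm f)^2" by simp
    qed
    finally have "sqrt (Lint 1 (\<lambda>x. (w x)^2)) \<le> sqrt ((C * L2norm f)^2)" by (rule real_sqrt_le_mono)
    moreover have "sqrt ((C * L2norm f)^2) = C * L2norm f" using K0 by simp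
    ultimately show ?thesis unfolding L2norm_def[of w] by simp
  qed
  show ?thesis unfolding resolvent_set_def
  proof (intro CollectI conjI allI impI)
    fix f assume "L2 f" then show "\<exists>w d. res_eq l \<mu> w d f" by (rule exist_small[OF n mu q])
  next
    fix w d assume sol: "res_eq l \<mu> w d (\<lambda>_. 0)"
    show "AE x in lebesgue_on {0..1}. w x = 0"
    proof (rule AE_I2)
      fix x :: real assume "x \<in> space (lebesgue_on {0..1})"
      then have x: "x \<in> {0..1}" by simp
      have "\<bar>w x - Lint 1 (\<lambda>_. 0) / \<mu>\<bar> \<le> 2^(n+1) * A1 (\<lambda>y. (\<lambda>_. 0) y - Lint 1 (\<lambda>_. 0))"
        by (rule apriori[OF n mu q L2_zero sol x])
      then show "w x = 0" by simp
    qed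
  next
    show "\<exists>C. \<forall>f w d. L2 f \<and> res_eq l \<mu> w d f \<longrightarrow> L2norm w \<le> C * L2norm f"
      using bound by blast
  qed
qed

lemma A1_nonneg_eq:
  assumes f: "L2 f" and pos: "AE x in lebesgue_on {0..1}. f x \<ge> 0"
  shows "A1 f = Lint 1 f"
proof -
  have If: "I01 f" using f by (rule L2_int)
  show ?thesis
    by (rule integral_cong_AE[OF borel_measurable_integrable[OF integrable_abs[OF If]] borel_measurable_integrable[OF If]])
       (use pos in \<open>eventually_elim, simp\<close>)
qed

lemma small_est:
  fixes l :: nat and \<mu> :: real
  assumes n: "n = 2*l+1" and mu: "\<mu> \<noteq> 0" and e: "\<bar>\<mu>\<bar> < 1/2^(n+3)"
    and f: "L2 f" and pos: "AE x in lebesgue_on {0..1}. f x \<ge> 0"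
    and sol: "res_eq l \<mu> w d f" and x: "x \<in> {0..1}"
  shows "\<bar>w x - Lint 1 f / \<mu>\<bar> \<le> 2^(n+2) * Lint 1 f" and "0 \<le> Lint 1 f"
proof -
  have q: "2^n * \<bar>\<mu>\<bar> \<le> 1/2"
  proof -
    have "2^n * \<bar>\<mu>\<bar> \<le> 2^n * (1/2^(n+3))" by (rule mult_left_mono) (use e in simp_all)
    also have "\<dots> = 1/8" by (simp add: power_add)
    finally show ?thesis by simp
  qed
  have If: "I01 f" using f by (rule L2_int)
  show m0: "0 \<le> Lint 1 f" by (rule integral_nonneg_AE[OF pos])
  have "\<bar>w x - Lint 1 f / \<mu>\<bar> \<le> 2^(n+1) * A1 (\<lambda>y. f y - Lint 1 f)"
    by (rule apriori[OF n mu q f sol x])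
  also have "\<dots> \<le> 2^(n+1) * (A1 f + \<bar>Lint 1 f\<bar>)" using A1_shift[OF If, of "Lint 1 f"] by simp
  also have "\<dots> = 2^(n+1) * (2 * Lint 1 f)" using A1_nonneg_eq[OF f pos] m0 by simp
  finally show "\<bar>w x - Lint 1 f / \<mu>\<bar> \<le> 2^(n+2) * Lint 1 f" by simp
qed

lemma small_pos:
  fixes l :: nat and \<mu> :: real
  assumes n: "n = 2*l+1" and mu: "0 < \<mu>" and e: "\<mu> < 1/2^(n+3)"
    and f: "L2 f" and pos: "AE x in lebesgue_on {0..1}. f x \<ge> 0"
    and sol: "res_eq l \<mu> w d f" and x: "x \<in> {0..1}"
  shows "Lint 1 f \<le> w x"
proof -
  have e': "\<bar>\<mu>\<bar> < 1/2^(n+3)" using mu e by simp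
  note est = small_est[OF n _ e' f pos sol x]
  have m0: "0 \<le> Lint 1 f" using est(2) mu by simp
  have a: "w x \<ge> Lint 1 f / \<mu> - 2^(n+2) * Lint 1 f" using est(1) mu by simp
  have "2^(n+3) < 1/\<mu>" using e mu by (simp add: field_simps)
  then have "2^(n+3) * Lint 1 f \<le> (1/\<mu>) * Lint 1 f" by (rule mult_right_mono[OF less_imp_le m0])
  then have b: "2^(n+3) * Lint 1 f \<le> Lint 1 f / \<mu>" by simp
  have e3: "(2::real)^(n+3) = 2 * 2^(n+2)" by (simp add: power_add)
  have "(1::real) \<le> 2^(n+2)" by (rule one_le_power) simp
  from mult_right_mono[OF this m0] have P: "Lint 1 f \<le> 2^(n+2) * Lint 1 f" by simp
  have "2^(n+3) * Lint 1 f = 2 * (2^(n+2) * Lint 1 f)" unfolding e3 by simp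
  then have "Lint 1 f \<le> 2^(n+3) * Lint 1 f - 2^(n+2) * Lint 1 f" using P by linarith
  then show ?thesis using a b by linarith
qed

lemma small_neg:
  fixes l :: nat and \<mu> :: real
  assumes n: "n = 2*l+1" and mu: "\<mu> < 0" and e: "-\<mu> < 1/2^(n+3)"
    and f: "L2 f" and pos: "AE x in lebesgue_on {0..1}. f x \<ge> 0"
    and sol: "res_eq l \<mu> w d f" and x: "x \<in> {0..1}"
  shows "w x \<le> - Lint 1 f"
proof -
  have e': "\<bar>\<mu>\<bar> < 1/2^(n+3)" using mu e by simp
  note est = small_est[OF n _ e' f pos sol x]
  have m0: "0 \<le> Lint 1 f" using est(2) mu by simp
  have a: "w x \<le> Lint 1 f / \<mu> + 2^(n+2) * Lint 1 f" using est(1) mu by simp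
  have "2^(n+3) < 1/(-\<mu>)" using e mu by (simp add: field_simps)
  then have "2^(n+3) * Lint 1 f \<le> (1/(-\<mu>)) * Lint 1 f" by (rule mult_right_mono[OF less_imp_le m0])
  then have b: "Lint 1 f / \<mu> \<le> - (2^(n+3) * Lint 1 f)" by (simp add: divide_minus_right)
  have e3: "(2::real)^(n+3) = 2 * 2^(n+2)" by (simp add: power_add)
  have "(1::real) \<le> 2^(n+2)" by (rule one_le_power) simp
  from mult_right_mono[OF this m0] have P: "Lint 1 f \<le> 2^(n+2) * Lint 1 f" by simp
  have "2^(n+3) * Lint 1 f = 2 * (2^(n+2) * Lint 1 f)" unfolding e3 by simp
  then have "Lint 1 f \<le> 2^(n+3) * Lint 1 f - 2^(n+2) * Lint 1 f" using P by linarith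
  then show ?thesis using a b by linarith
qed

lemma Res_sol: assumes "\<exists>w d. res_eq l \<mu> w d f" shows "\<exists>d. res_eq l \<mu> (Res l \<mu> f) d f"
  unfolding Res_def by (rule someI_ex[where P="\<lambda>w. \<exists>d. res_eq l \<mu> w d f", OF assms])

lemma op_pos_from:
  assumes ex: "\<And>f. L2 f \<Longrightarrow> \<exists>w d. res_eq l \<mu> w d f" and c: "c > 0"
    and H: "\<And>f w d x. L2 f \<Longrightarrow> AE x in lebesgue_on {0..1}. f x \<ge> 0 \<Longrightarrow> res_eq l \<mu> w d f \<Longrightarrow> x \<in> {0..1} \<Longrightarrow> c * Lint 1 f \<le> w x"
  shows "op_ge (Res l \<mu>) one_tensor_one"
  unfolding op_ge_def
proof (intro exI[of _ c] conjI allI impI)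
  show "c > 0" by (rule c)
  fix f assume fa: "L2 f \<and> (AE x in lebesgue_on {0..1}. 0 \<le> f x)"
  obtain d where sol: "res_eq l \<mu> (Res l \<mu> f) d f" using Res_sol[OF ex] fa by blast
  show "AE x in lebesgue_on {0..1}. 0 \<le> Res l \<mu> f x - c * one_tensor_one f x"
  proof (rule AE_I2)
    fix x :: real assume "x \<in> space (lebesgue_on {0..1})"
    then have x: "x \<in> {0..1}" by simp
    have "c * Lint 1 f \<le> Res l \<mu> f x" using H[OF _ _ sol x] fa by blast
    then show "0 \<le> Res l \<mu> f x - c * one_tensor_one f x" unfolding one_tensor_one_def by simp
  qed
qed

lemma op_neg_from:
  assumes ex: "\<And>f. L2 f \<Longrightarrow> \<exists>w d. res_eq l \<mu> w d f" and c: "c > 0"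
    and H: "\<And>f w d x. L2 f \<Longrightarrow> AE x in lebesgue_on {0..1}. f x \<ge> 0 \<Longrightarrow> res_eq l \<mu> w d f \<Longrightarrow> x \<in> {0..1} \<Longrightarrow> c * w x \<le> - Lint 1 f"
  shows "op_ge (\<lambda>f x. - one_tensor_one f x) (Res l \<mu>)"
  unfolding op_ge_def
proof (intro exI[of _ c] conjI allI impI)
  show "c > 0" by (rule c)
  fix f assume fa: "L2 f \<and> (AE x in lebesgue_on {0..1}. 0 \<le> f x)"
  obtain d where sol: "res_eq l \<mu> (Res l \<mu> f) d f" using Res_sol[OF ex] fa by blast
  show "AE x in lebesgue_on {0..1}. 0 \<le> - one_tensor_one f x - c * Res l \<mu> f x"
  proof (rule AE_I2)
    fix x :: real assume "x \<in> space (lebesgue_on {0..1})"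
    then have x: "x \<in> {0..1}" by simp
    have "c * Res l \<mu> f x \<le> - Lint 1 f" using H[OF _ _ sol x] fa by blast
    then show "0 \<le> - one_tensor_one f x - c * Res l \<mu> f x" unfolding one_tensor_one_def by simp
  qed
qed

lemma partA:
  fixes l :: nat
  shows "\<exists>\<epsilon>>0. \<forall>\<mu>\<in>{0<..<\<epsilon>}. \<mu> \<in> resolvent_set l \<and> op_ge (Res l \<mu>) one_tensor_one"
proof (intro exI[of _ "1/2^(2*l+1+3)"] conjI ballI)
  show "(0::real) < 1/2^(2*l+1+3)" by simp
  fix \<mu> :: real assume "\<mu> \<in> {0<..<1/2^(2*l+1+3)}"
  then have mu: "0 < \<mu>" "\<mu> < 1/2^(2*l+1+3)" by auto
  have ex: "\<And>f. L2 f \<Longrightarrow> \<exists>w d. res_eq l \<mu> w d f"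
  proof -
    fix f :: "real \<Rightarrow> real" assume f: "L2 f"
    have q: "2^(2*l+1) * \<bar>\<mu>\<bar> \<le> 1/2"
    proof -
      have "2^(2*l+1) * \<bar>\<mu>\<bar> \<le> 2^(2*l+1) * (1/2^(2*l+1+3))" by (rule mult_left_mono) (use mu in simp_all)
      also have "\<dots> = 1/8" by (simp add: power_add)
      finally show ?thesis by simp
    qed
    show "\<exists>w d. res_eq l \<mu> w d f" by (rule exist_small[OF refl _ q f]) (use mu in simp)
  qed
  show "\<mu> \<in> resolvent_set l" by (rule small_res[OF refl]) (use mu in simp_all)
  show "op_ge (Res l \<mu>) one_tensor_one"
    by (rule op_pos_from[OF ex, of 1]) (use small_pos[OF refl mu] in simp_all)
qed

lemma partB:
  fixes l :: nat
  shows "\<exists>\<epsilon>>0. \<forall>\<mu>\<in>{-\<epsilon><..<0}. \<mu> \<in> resolvent_set l \<and> op_ge (\<lambda>f x. - one_tensor_one f x) (Res l \<mu>)"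
proof (intro exI[of _ "1/2^(2*l+1+3)"] conjI ballI)
  show "(0::real) < 1/2^(2*l+1+3)" by simp
  fix \<mu> :: real assume "\<mu> \<in> {-(1/2^(2*l+1+3))<..<0}"
  then have mu: "\<mu> < 0" "-\<mu> < 1/2^(2*l+1+3)" by auto
  have ex: "\<And>f. L2 f \<Longrightarrow> \<exists>w d. res_eq l \<mu> w d f"
  proof -
    fix f :: "real \<Rightarrow> real" assume f: "L2 f"
    have q: "2^(2*l+1) * \<bar>\<mu>\<bar> \<le> 1/2"
    proof -
      have "2^(2*l+1) * \<bar>\<mu>\<bar> \<le> 2^(2*l+1) * (1/2^(2*l+1+3))" by (rule mult_left_mono) (use mu in simp_all)
      also have "\<dots> = 1/8" by (simp add: power_add)
      finally show ?thesis by simp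
    qed
    show "\<exists>w d. res_eq l \<mu> w d f" by (rule exist_small[OF refl _ q f]) (use mu in simp)
  qed
  show "\<mu> \<in> resolvent_set l" by (rule small_res[OF refl]) (use mu in simp_all)
  show "op_ge (\<lambda>f x. - one_tensor_one f x) (Res l \<mu>)"
    by (rule op_neg_from[OF ex, of 1]) (use small_neg[OF refl mu] in simp_all)
qed

lemma FTC:
  fixes G g :: "real \<Rightarrow> real"
  assumes ab: "a \<le> b" and D: "\<And>x. x \<in> {a..b} \<Longrightarrow> (G has_real_derivative g x) (at x within {a..b})"
  shows "integral {a..b} g = G b - G a" "g integrable_on {a..b}"
proof -
  have "(g has_integral (G b - G a)) {a..b}"
    by (rule fundamental_theorem_of_calculus[OF ab]) (use D in \<open>simp add: has_real_derivative_iff_has_vector_derivative\<close>)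
  then show "integral {a..b} g = G b - G a" "g integrable_on {a..b}"
    by (auto simp: integral_unique has_integral_integrable)
qed

lemma int_deriv:
  fixes \<phi> :: "real \<Rightarrow> real"
  assumes "continuous_on {0..1} \<phi>" "x \<in> {0..1}"
  shows "((\<lambda>u. integral {0..u} \<phi>) has_real_derivative \<phi> x) (at x within {0..1})"
  using integral_has_vector_derivative[OF assms] by (simp add: has_real_derivative_iff_has_vector_derivative)

lemma hk_bound:
  fixes g :: "real \<Rightarrow> real"
  assumes g: "continuous_on {0..1} g" and B: "\<And>r. r \<in> {0..1} \<Longrightarrow> \<bar>g r\<bar> \<le> B"
    and ab: "0 \<le> a" "a \<le> b" "b \<le> 1"
  shows "\<bar>integral {a..b} g\<bar> \<le> B"
proof -
  have B0: "0 \<le> B" using B[of 0] by simp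
  have gi: "g integrable_on {a..b}"
    by (rule integrable_continuous_interval) (rule continuous_on_subset[OF g], use ab in auto)
  have "norm (integral {a..b} g) \<le> B * measure lborel {a..b}"
    by (rule has_integral_bound_real[OF B0 finite.emptyI integrable_integral[OF gi]]) (use B ab in auto)
  also have "\<dots> \<le> B * 1" using ab B0 by (intro mult_left_mono) simp_all
  finally show ?thesis by simp
qed

lemma exp_int:
  fixes \<mu> :: real
  assumes mu: "\<mu> \<noteq> 0" and ab: "a \<le> b"
  shows "integral {a..b} (\<lambda>r. exp (-\<mu> * r)) = (exp (-\<mu> * a) - exp (-\<mu> * b)) / \<mu>"
proof -
  have D: "((\<lambda>r. - exp (-\<mu> * r) / \<mu>) has_real_derivative exp (-\<mu> * x)) (at x within {a..b})" for x
    using mu by (auto intro!: derivative_eq_intros)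
  have "integral {a..b} (\<lambda>r. exp (-\<mu> * r)) = - exp (-\<mu> * b) / \<mu> - (- exp (-\<mu> * a) / \<mu>)"
    by (rule FTC(1)[OF ab D])
  then show ?thesis by (simp add: diff_divide_distrib)
qed

lemma sol0_facts:
  assumes sol: "res_eq 0 \<mu> w d f"
  shows "d 0 = w" "I01 (d 1)" "\<forall>y\<in>{0..1}. w y = w 0 + Lint y (d 1)" "w 0 = w 1"
    "AE y in lebesgue_on {0..1}. d 1 y = \<mu> * w y - f y" "L2 (d 1)"
proof -
  have dom: "domA 0 w d" and AEs: "AE y in lebesgue_on {0..1}. \<mu> * w y - d 1 y = f y"
    using sol unfolding res_eq_def by simp_all
  have sob: "sob_rep 1 w d" and per: "\<forall>k\<le>0. d k 0 = d k 1" using dom unfolding domA_def by simp_all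
  have sobd: "d 0 = w \<and> (\<forall>k<1. I01 (d (Suc k)) \<and> (\<forall>y\<in>{0..1}. d k y = d k 0 + Lint y (d (Suc k)))) \<and> L2 (d 1)"
    using sob unfolding sob_rep_def .
  show d0: "d 0 = w" using sobd by (rule conjunct1)
  have r: "\<forall>k<1. I01 (d (Suc k)) \<and> (\<forall>y\<in>{0..1}. d k y = d k 0 + Lint y (d (Suc k)))"
    using sobd by (rule conjunct1[OF conjunct2])
  have z: "(0::nat) < 1" by simp
  have c: "I01 (d (Suc 0)) \<and> (\<forall>y\<in>{0..1}. d 0 y = d 0 0 + Lint y (d (Suc 0)))" by (rule mp[OF spec[OF r, of 0] z])
  show "I01 (d 1)" using conjunct1[OF c] by simp
  show "\<forall>y\<in>{0..1}. w y = w 0 + Lint y (d 1)" unfolding d0[symmetric] One_nat_def by (rule conjunct2[OF c])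
  show "w 0 = w 1" using spec[OF per, of 0] d0 by simp
  show "AE y in lebesgue_on {0..1}. d 1 y = \<mu> * w y - f y" using AEs by eventually_elim simp
  show "L2 (d 1)" using conjunct2[OF conjunct2[OF sobd]] by simp
qed

context
  fixes \<mu> :: real and f w :: "real \<Rightarrow> real" and d
  assumes mu: "\<mu> \<noteq> 0" and f: "L2 f" and sol: "res_eq 0 \<mu> w d f"
begin

lemma C_wc: "continuous_on {0..1} w" by (rule sol_cont[OF sol])
lemma C_If: "I01 f" by (rule L2_int[OF f])

lemma C_i: assumes y: "y \<in> {0..1}" shows "w y = w 0 - Lint y f + \<mu> * integral {0..y} w"
proof -
  note fa = sol0_facts[OF sol]
  have Iw: "I01 w" by (rule cont_LI[OF C_wc])
  have Iwy: "integrable (lebesgue_on {0..y}) w" by (rule LI_sub[OF Iw]) (use y in simp_all)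
  have Ify: "integrable (lebesgue_on {0..y}) f" by (rule LI_sub[OF C_If]) (use y in simp_all)
  have Idy: "integrable (lebesgue_on {0..y}) (d 1)" by (rule LI_sub[OF fa(2)]) (use y in simp_all)
  have Imy: "integrable (lebesgue_on {0..y}) (\<lambda>r. \<mu> * w r - f r)"
    by (rule Bochner_Integration.integrable_diff[OF integrable_mult_right[OF Iwy] Ify])
  have AEy: "AE r in lebesgue_on {0..y}. d 1 r = \<mu> * w r - f r" by (rule AE_sub[OF fa(5)]) (use y in simp_all)
  have "Lint y (d 1) = Lint y (\<lambda>r. \<mu> * w r - f r)"
    by (rule integral_cong_AE[OF borel_measurable_integrable[OF Idy] borel_measurable_integrable[OF Imy] AEy])
  also have "\<dots> = \<mu> * Lint y w - Lint y f"
    by (simp add: Bochner_Integration.integral_diff[OF integrable_mult_right[OF Iwy] Ify])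
  also have "Lint y w = integral {0..y} w" by (rule Lint_HK(1)[OF Iwy])
  finally have "Lint y (d 1) = \<mu> * integral {0..y} w - Lint y f" .
  moreover have "w y = w 0 + Lint y (d 1)" using bspec[OF fa(3) y] .
  ultimately show ?thesis by simp
qed

lemma C_Fc: "continuous_on {0..1} (\<lambda>y. Lint y f)" by (rule cont_indef[OF C_If])

lemma C_ii: assumes y: "y \<in> {0..1}"
  shows "exp (-\<mu> * y) * integral {0..y} w = integral {0..y} (\<lambda>r. exp (-\<mu> * r) * (w 0 - Lint r f))"
proof -
  have D: "((\<lambda>r. exp (-\<mu> * r) * integral {0..r} w) has_real_derivative exp (-\<mu> * x) * (w 0 - Lint x f)) (at x within {0..y})"
    if x: "x \<in> {0..y}" for x
  proof -
    have x1: "x \<in> {0..1}" using x y by auto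
    have W: "((\<lambda>u. integral {0..u} w) has_real_derivative w x) (at x within {0..y})"
      by (rule DERIV_subset[OF int_deriv[OF C_wc x1]]) (use y in auto)
    have E: "((\<lambda>r. exp (-\<mu> * r)) has_real_derivative exp (-\<mu> * x) * (-\<mu>)) (at x within {0..y})"
      by (auto intro!: derivative_eq_intros)
    show ?thesis
    proof (rule DERIV_cong[OF DERIV_mult[OF E W]])
      have e: "w x = w 0 - Lint x f + \<mu> * integral {0..x} w" by (rule C_i[OF x1])
      show "exp (- \<mu> * x) * - \<mu> * integral {0..x} w + w x * exp (- \<mu> * x) = exp (- \<mu> * x) * (w 0 - Lint x f)"
        unfolding e by (simp add: algebra_simps)
    qed
  qed
  have "integral {0..y} (\<lambda>r. exp (-\<mu> * r) * (w 0 - Lint r f)) = exp (-\<mu> * y) * integral {0..y} w - exp (-\<mu> * 0) * integral {0..0} w"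
    by (rule FTC(1)) (use y D in auto)
  then show ?thesis by simp
qed

lemma C_mean: "Lint 1 w = Lint 1 f / \<mu>"
proof -
  note fa = sol0_facts[OF sol]
  have Iw: "I01 w" by (rule cont_LI[OF C_wc])
  have Imf: "I01 (\<lambda>y. \<mu> * w y - f y)"
    by (rule Bochner_Integration.integrable_diff[OF integrable_mult_right[OF Iw] C_If])
  have "Lint 1 (d 1) = Lint 1 (\<lambda>y. \<mu> * w y - f y)"
    by (rule integral_cong_AE[OF borel_measurable_integrable[OF fa(2)] borel_measurable_integrable[OF Imf] fa(5)])
  also have "\<dots> = \<mu> * Lint 1 w - Lint 1 f"
    by (simp add: Bochner_Integration.integral_diff[OF integrable_mult_right[OF Iw] C_If])
  finally have a: "Lint 1 (d 1) = \<mu> * Lint 1 w - Lint 1 f" .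
  have "w 1 = w 0 + Lint 1 (d 1)" using bspec[OF fa(3), of 1] by simp
  then have "Lint 1 (d 1) = 0" using fa(4) by linarith
  then show ?thesis using a mu by (simp add: field_simps)
qed

end

lemma abs3: "\<bar>(a::real) - b + c\<bar> \<le> \<bar>a\<bar> + \<bar>b\<bar> + \<bar>c\<bar>"
  by linarith

lemma exp_le_abs: "r \<in> {0..1} \<Longrightarrow> exp (c * r) \<le> exp \<bar>c::real\<bar>"
proof -
  assume r: "r \<in> {0..1}"
  have "c * r \<le> \<bar>c\<bar> * r" using r by (intro mult_right_mono) auto
  also have "\<dots> \<le> \<bar>c\<bar>" using r by (simp add: mult_left_le)
  finally show ?thesis by simp
qed

context
  fixes \<mu> :: real and f w :: "real \<Rightarrow> real" and d
  assumes mu: "\<mu> \<noteq> 0" and f: "L2 f" and sol: "res_eq 0 \<mu> w d f"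
begin

lemma C_cont_phi: "continuous_on {0..1} (\<lambda>r. exp (-\<mu> * r) * (w 0 - Lint r f))"
  by (intro continuous_intros C_Fc[OF mu f sol])

lemma C_cont_K: "continuous_on {0..1} (\<lambda>r. exp (-\<mu> * r) * Lint r f)"
  by (intro continuous_intros C_Fc[OF mu f sol])

lemma C_per: "w 0 * (exp \<mu> - 1) = Lint 1 f + \<mu> * exp \<mu> * integral {0..1} (\<lambda>r. exp (-\<mu> * r) * Lint r f)"
proof -
  define K where "K = integral {0..1} (\<lambda>r. exp (-\<mu> * r) * Lint r f)"
  define W1 where "W1 = integral {0..1} w"
  have z1: "(1::real) \<in> {0..1}" by simp
  have i1: "w 1 = w 0 - Lint 1 f + \<mu> * W1" unfolding W1_def by (rule C_i[OF mu f sol z1])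
  have per: "w 0 = w 1" by (rule sol0_facts(4)[OF sol])
  have mW: "\<mu> * W1 = Lint 1 f" using i1 per by linarith
  have ii: "exp (-\<mu>) * W1 = integral {0..1} (\<lambda>r. exp (-\<mu> * r) * (w 0 - Lint r f))"
    using C_ii[OF mu f sol z1] unfolding W1_def by simp
  have int1: "(\<lambda>r. w 0 * exp (-\<mu> * r)) integrable_on {0..1}"
    by (rule integrable_continuous_interval) (intro continuous_intros)
  have int2: "(\<lambda>r. exp (-\<mu> * r) * Lint r f) integrable_on {0..1}"
    by (rule integrable_continuous_interval[OF C_cont_K])
  have "integral {0..1} (\<lambda>r. exp (-\<mu> * r) * (w 0 - Lint r f))
        = integral {0..1} (\<lambda>r. w 0 * exp (-\<mu> * r) - exp (-\<mu> * r) * Lint r f)"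
    by (simp add: algebra_simps)
  also have "\<dots> = integral {0..1} (\<lambda>r. w 0 * exp (-\<mu> * r)) - K"
    unfolding K_def by (rule integral_diff[OF int1 int2])
  also have "integral {0..1} (\<lambda>r. w 0 * exp (-\<mu> * r)) = w 0 * ((exp (-\<mu> * 0) - exp (-\<mu> * 1)) / \<mu>)"
    using exp_int[OF mu, of 0 1] by simp
  finally have "exp (-\<mu>) * W1 = w 0 * ((1 - exp (-\<mu>)) / \<mu>) - K" using ii by simp
  then have "exp \<mu> * (exp (-\<mu>) * W1) = exp \<mu> * (w 0 * ((1 - exp (-\<mu>)) / \<mu>) - K)" by simp
  then have "W1 = exp \<mu> * (w 0 * ((1 - exp (-\<mu>)) / \<mu>) - K)" by (simp add: exp_minus field_simps)
  then have "\<mu> * W1 = w 0 * (exp \<mu> * (1 - exp (-\<mu>))) - \<mu> * exp \<mu> * K" using mu by (simp add: field_simps)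
  also have "exp \<mu> * (1 - exp (-\<mu>)) = exp \<mu> - 1" by (simp add: algebra_simps exp_minus)
  finally show ?thesis using mW unfolding K_def by simp
qed

lemma C_bound: assumes y: "y \<in> {0..1}"
  shows "\<bar>w y\<bar> \<le> (1 + (1 + \<bar>\<mu>\<bar> * exp \<bar>\<mu>\<bar> * exp \<bar>\<mu>\<bar>) / \<bar>exp \<mu> - 1\<bar>) * (1 + \<bar>\<mu>\<bar> * exp \<bar>\<mu>\<bar> * exp \<bar>\<mu>\<bar>) * A1 f"
proof -
  define N where "N = A1 f"
  define E where "E = exp \<bar>\<mu>\<bar>"
  define Z where "Z = \<bar>exp \<mu> - 1\<bar>"
  have If: "I01 f" by (rule L2_int[OF f])
  have N0: "0 \<le> N" unfolding N_def by (rule integral_nonneg_AE) simp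
  have E0: "0 \<le> E" unfolding E_def by simp
  have Z0: "0 < Z" unfolding Z_def using mu by simp
  have FN: "\<bar>Lint r f\<bar> \<le> N" if "r \<in> {0..1}" for r unfolding N_def by (rule abs_bound[OF If that])
  have eE: "exp (-\<mu> * r) \<le> E" if "r \<in> {0..1}" for r unfolding E_def using exp_le_abs[OF that, of "-\<mu>"] by simp
  have eE': "exp (\<mu> * r) \<le> E" if "r \<in> {0..1}" for r unfolding E_def using exp_le_abs[OF that, of "\<mu>"] by simp
  define K where "K = integral {0..1} (\<lambda>r. exp (-\<mu> * r) * Lint r f)"
  have KB: "\<bar>K\<bar> \<le> E * N" unfolding K_def
  proof (rule hk_bound[OF C_cont_K])
    fix r :: real assume r: "r \<in> {0..1}"
    have "\<bar>exp (-\<mu> * r) * Lint r f\<bar> = exp (-\<mu> * r) * \<bar>Lint r f\<bar>" by (simp add: abs_mult)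
    also have "\<dots> \<le> E * N" by (rule mult_mono[OF eE[OF r] FN[OF r] E0]) simp
    finally show "\<bar>exp (-\<mu> * r) * Lint r f\<bar> \<le> E * N" .
  qed simp_all
  have mN: "\<bar>Lint 1 f\<bar> \<le> N" unfolding N_def by (rule integral_abs_bound)
  have eu: "\<bar>exp \<mu>\<bar> \<le> E" unfolding E_def by simp
  have "\<bar>w 0\<bar> * Z = \<bar>Lint 1 f + \<mu> * exp \<mu> * K\<bar>" unfolding Z_def K_def using C_per by (metis abs_mult)
  also have "\<dots> \<le> \<bar>Lint 1 f\<bar> + \<bar>\<mu>\<bar> * \<bar>exp \<mu>\<bar> * \<bar>K\<bar>" using abs_triangle_ineq[of "Lint 1 f" "\<mu> * exp \<mu> * K"] by (simp add: abs_mult)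
  also have "\<dots> \<le> N + \<bar>\<mu>\<bar> * E * (E * N)"
  proof -
    have "\<bar>\<mu>\<bar> * \<bar>exp \<mu>\<bar> * \<bar>K\<bar> \<le> \<bar>\<mu>\<bar> * E * (E * N)"
      by (rule mult_mono[OF mult_left_mono[OF eu abs_ge_zero] KB]) (simp_all add: E0)
    then show ?thesis using mN by linarith
  qed
  finally have "\<bar>w 0\<bar> * Z \<le> N * (1 + \<bar>\<mu>\<bar> * E * E)" by (simp add: algebra_simps)
  then have a0: "\<bar>w 0\<bar> \<le> N * (1 + \<bar>\<mu>\<bar> * E * E) / Z" using Z0 by (simp add: field_simps)
  define Q where "Q = integral {0..y} (\<lambda>r. exp (-\<mu> * r) * (w 0 - Lint r f))"
  have QB: "\<bar>Q\<bar> \<le> E * (\<bar>w 0\<bar> + N)" unfolding Q_def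
  proof (rule hk_bound[OF C_cont_phi])
    fix r :: real assume r: "r \<in> {0..1}"
    have "\<bar>w 0 - Lint r f\<bar> \<le> \<bar>w 0\<bar> + N" using FN[OF r] by linarith
    have "\<bar>exp (-\<mu> * r) * (w 0 - Lint r f)\<bar> = exp (-\<mu> * r) * \<bar>w 0 - Lint r f\<bar>" by (simp add: abs_mult)
    also have "\<dots> \<le> E * (\<bar>w 0\<bar> + N)" by (rule mult_mono[OF eE[OF r] \<open>\<bar>w 0 - Lint r f\<bar> \<le> \<bar>w 0\<bar> + N\<close> E0]) simp
    finally show "\<bar>exp (-\<mu> * r) * (w 0 - Lint r f)\<bar> \<le> E * (\<bar>w 0\<bar> + N)" .
  qed (use y in simp_all)
  have W: "integral {0..y} w = exp (\<mu> * y) * Q"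
    using C_ii[OF mu f sol y] unfolding Q_def by (simp add: exp_minus field_simps)
  have WB: "\<bar>integral {0..y} w\<bar> \<le> E * (E * (\<bar>w 0\<bar> + N))"
    unfolding W abs_mult using mult_mono[OF eE'[OF y] QB] E0 by simp
  have "\<bar>w y\<bar> \<le> \<bar>w 0\<bar> + N + \<bar>\<mu>\<bar> * \<bar>integral {0..y} w\<bar>"
  proof -
    have "\<bar>w y\<bar> \<le> \<bar>w 0\<bar> + \<bar>Lint y f\<bar> + \<bar>\<mu> * integral {0..y} w\<bar>"
      unfolding C_i[OF mu f sol y] by (rule abs3)
    then show ?thesis using FN[OF y] by (simp add: abs_mult)
  qed
  also have "\<dots> \<le> \<bar>w 0\<bar> + N + \<bar>\<mu>\<bar> * (E * (E * (\<bar>w 0\<bar> + N)))"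
    using mult_left_mono[OF WB abs_ge_zero] by simp
  also have "\<dots> = (\<bar>w 0\<bar> + N) * (1 + \<bar>\<mu>\<bar> * E * E)" by (simp add: algebra_simps)
  also have "\<dots> \<le> (N * (1 + \<bar>\<mu>\<bar> * E * E) / Z + N) * (1 + \<bar>\<mu>\<bar> * E * E)"
    using a0 E0 by (intro mult_right_mono) simp_all
  also have "\<dots> = (1 + (1 + \<bar>\<mu>\<bar> * E * E) / Z) * (1 + \<bar>\<mu>\<bar> * E * E) * N" by (simp add: algebra_simps)
  finally show ?thesis unfolding N_def E_def Z_def .
qed

end

lemma L2_combo:
  assumes f: "L2 f" and Iw: "I01 w" and B: "\<And>x. x \<in> {0..1} \<Longrightarrow> \<bar>\<mu> * w x\<bar> \<le> B"
  shows "L2 (\<lambda>x. \<mu> * w x - f x)"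
  unfolding L2_def
proof
  have If: "I01 f" by (rule L2_int[OF f])
  have Idn: "I01 (\<lambda>x. \<mu> * w x - f x)"
    by (rule Bochner_Integration.integrable_diff[OF integrable_mult_right[OF Iw] If])
  show "(\<lambda>x. \<mu> * w x - f x) \<in> borel_measurable (lebesgue_on {0..1})" by (rule borel_measurable_integrable[OF Idn])
  show "integrable (lebesgue_on {0..1}) (\<lambda>x. (\<mu> * w x - f x)^2)"
  proof (rule Bochner_Integration.integrable_bound)
    have sq: "I01 (\<lambda>x. (f x)^2)" using f unfolding L2_def by simp
    show "I01 (\<lambda>x. 2*B^2 + 2*(f x)^2)"
      by (rule Bochner_Integration.integrable_add[OF I01_const integrable_mult_right[OF sq]])
    show "(\<lambda>x. (\<mu> * w x - f x)^2) \<in> borel_measurable (lebesgue_on {0..1})"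
      by (rule borel_measurable_power[OF borel_measurable_integrable[OF Idn]])
    show "AE x in lebesgue_on {0..1}. norm ((\<mu> * w x - f x)^2) \<le> norm (2*B^2 + 2*(f x)^2)"
    proof (rule AE_I2)
      fix x :: real assume "x \<in> space (lebesgue_on {0..1})"
      then have x: "x \<in> {0..1}" by simp
      have "(\<mu> * w x - f x)^2 \<le> 2*B^2 + 2*(f x)^2" by (rule sq_le[OF B[OF x]])
      then show "norm ((\<mu> * w x - f x)^2) \<le> norm (2*B^2 + 2*(f x)^2)" by simp
    qed
  qed
qed

lemma exist0:
  fixes \<mu> :: real
  assumes mu: "\<mu> \<noteq> 0" and f: "L2 f"
  shows "\<exists>w d. res_eq 0 \<mu> w d f"
proof -
  have If: "I01 f" by (rule L2_int[OF f])
  define F where "F = (\<lambda>r. Lint r f)"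
  have Fc: "continuous_on {0..1} F" unfolding F_def by (rule cont_indef[OF If])
  have F0: "F 0 = 0" unfolding F_def by (rule Lint_0[OF If])
  define K where "K = integral {0..1} (\<lambda>r. exp (-\<mu> * r) * F r)"
  define a where "a = (Lint 1 f + \<mu> * exp \<mu> * K) / (exp \<mu> - 1)"
  have ea: "a * (exp \<mu> - 1) = Lint 1 f + \<mu> * exp \<mu> * K" unfolding a_def using mu by simp
  define g where "g = (\<lambda>r. exp (-\<mu> * r) * (a - F r))"
  have gc: "continuous_on {0..1} g" unfolding g_def by (intro continuous_intros Fc)
  define Q where "Q = (\<lambda>y. integral {0..y} g)"
  define W where "W = (\<lambda>y. exp (\<mu> * y) * Q y)"
  define w where "w = (\<lambda>y. a - F y + \<mu> * W y)"
  have Qc: "continuous_on {0..1} Q" unfolding Q_def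
    by (rule indefinite_integral_continuous_1[OF integrable_continuous_interval[OF gc]])
  have wc: "continuous_on {0..1} w" unfolding w_def W_def by (intro continuous_intros Fc Qc)
  have Iw: "I01 w" by (rule cont_LI[OF wc])
  have Wd: "(W has_real_derivative w x) (at x within {0..1})" if x: "x \<in> {0..1}" for x
  proof -
    have E: "((\<lambda>r. exp (\<mu> * r)) has_real_derivative exp (\<mu> * x) * \<mu>) (at x within {0..1})"
      by (auto intro!: derivative_eq_intros)
    have Qd: "(Q has_real_derivative g x) (at x within {0..1})" unfolding Q_def by (rule int_deriv[OF gc x])
    show ?thesis unfolding W_def
    proof (rule DERIV_cong[OF DERIV_mult[OF E Qd]])
      have ee: "exp (-\<mu> * x) * exp (\<mu> * x) = 1" by (simp add: exp_minus)
      have "g x * exp (\<mu> * x) = (a - F x) * (exp (-\<mu> * x) * exp (\<mu> * x))" unfolding g_def by (simp only: mult_ac)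
      also have "\<dots> = a - F x" unfolding ee by simp
      finally show "exp (\<mu> * x) * \<mu> * Q x + g x * exp (\<mu> * x) = w x"
        unfolding w_def W_def by (simp add: algebra_simps)
    qed
  qed
  have W0: "W 0 = 0" unfolding W_def Q_def by simp
  have intw: "integral {0..y} w = W y" if y: "y \<in> {0..1}" for y
  proof -
    have "integral {0..y} w = W y - W 0"
      by (rule FTC(1)) (use y in \<open>auto intro: DERIV_subset[OF Wd]\<close>)
    then show ?thesis using W0 by simp
  qed
  have w0: "w 0 = a" unfolding w_def using F0 W0 by simp
  define d where "d = (\<lambda>j::nat. if j = 0 then w else (\<lambda>x. \<mu> * w x - f x))"
  have d1: "d (Suc 0) = (\<lambda>x. \<mu> * w x - f x)" unfolding d_def by simp
  have Id1: "I01 (d (Suc 0))" unfolding d1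
    by (rule Bochner_Integration.integrable_diff[OF integrable_mult_right[OF Iw] If])
  have rel: "d 0 y = d 0 0 + Lint y (d (Suc 0))" if y: "y \<in> {0..1}" for y
  proof -
    have Iwy: "integrable (lebesgue_on {0..y}) w" by (rule LI_sub[OF Iw]) (use y in simp_all)
    have Ify: "integrable (lebesgue_on {0..y}) f" by (rule LI_sub[OF If]) (use y in simp_all)
    have "Lint y (d (Suc 0)) = \<mu> * Lint y w - Lint y f" unfolding d1
      by (simp add: Bochner_Integration.integral_diff[OF integrable_mult_right[OF Iwy] Ify])
    also have "Lint y w = W y" using Lint_HK(1)[OF Iwy] intw[OF y] by simp
    finally have "Lint y (d (Suc 0)) = \<mu> * W y - F y" unfolding F_def .
    then show ?thesis unfolding d_def using w0 by (simp add: w_def)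
  qed
  have wc2: "continuous_on {0..1} (\<lambda>x. \<mu> * w x)" by (intro continuous_intros wc)
  obtain B where B: "\<And>x. x \<in> {0..1} \<Longrightarrow> norm (\<mu> * w x) \<le> B"
    using continuous_on_compact_bound[OF compact_Icc wc2] by blast
  have L2d: "L2 (d (Suc 0))" unfolding d1 by (rule L2_combo[OF f Iw]) (use B in simp)
  have per: "w 0 = w 1"
  proof -
    have int1: "(\<lambda>r. a * exp (-\<mu> * r)) integrable_on {0..1}"
      by (rule integrable_continuous_interval) (intro continuous_intros)
    have int2: "(\<lambda>r. exp (-\<mu> * r) * F r) integrable_on {0..1}"
      by (rule integrable_continuous_interval) (intro continuous_intros Fc)
    have "Q 1 = integral {0..1} (\<lambda>r. a * exp (-\<mu> * r) - exp (-\<mu> * r) * F r)"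
      unfolding Q_def g_def by (simp add: algebra_simps)
    also have "\<dots> = integral {0..1} (\<lambda>r. a * exp (-\<mu> * r)) - K"
      unfolding K_def by (rule integral_diff[OF int1 int2])
    also have "integral {0..1} (\<lambda>r. a * exp (-\<mu> * r)) = a * ((exp (-\<mu> * 0) - exp (-\<mu> * 1)) / \<mu>)"
      using exp_int[OF mu, of 0 1] by simp
    finally have Q1: "Q 1 = a * ((1 - exp (-\<mu>)) / \<mu>) - K" by simp
    have "\<mu> * W 1 = a * (exp \<mu> * (1 - exp (-\<mu>))) - \<mu> * exp \<mu> * K"
      unfolding W_def Q1 using mu by (simp add: field_simps)
    also have "exp \<mu> * (1 - exp (-\<mu>)) = exp \<mu> - 1" by (simp add: algebra_simps exp_minus)
    finally have "\<mu> * W 1 = Lint 1 f" using ea by simp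
    then show ?thesis unfolding w_def F_def using F0 W0 unfolding F_def by simp
  qed
  have "res_eq 0 \<mu> w d f"
    unfolding res_eq_def domA_def sob_rep_def
  proof (intro conjI allI impI ballI)
    show "d 0 = w" unfolding d_def by simp
  next
    fix k :: nat assume "k < 2*0+1"
    then have k: "k = 0" by simp
    show "I01 (d (Suc k))" unfolding k by (rule Id1)
  next
    fix k :: nat and y :: real assume k1: "k < 2*0+1" and y: "y \<in> {0..1}"
    from k1 have k: "k = 0" by simp
    show "d k y = d k 0 + Lint y (d (Suc k))" unfolding k by (rule rel[OF y])
  next
    show "L2 (d (2*0+1))" using L2d by simp
  next
    fix k :: nat assume "k \<le> 2*0"
    then have k: "k = 0" by simp
    show "d k 0 = d k 1" unfolding k d_def using per by simp
  next
    show "AE x in lebesgue_on {0..1}. \<mu> * w x - d (2*0+1) x = f x" unfolding d_def by simp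
  qed
  then show ?thesis by blast
qed

lemma L2norm_pt:
  assumes wc: "continuous_on {0..1} w" and pt: "\<And>x. x \<in> {0..1} \<Longrightarrow> \<bar>w x\<bar> \<le> K"
  shows "L2norm w \<le> K"
proof -
  have Iw2: "I01 (\<lambda>x. (w x)^2)" by (rule cont_LI) (intro continuous_on_power wc)
  have K0: "0 \<le> K" using pt[of 0] by simp
  have "Lint 1 (\<lambda>x. (w x)^2) \<le> Lint 1 (\<lambda>x. \<bar>(w x)^2\<bar>)" by simp
  also have "\<dots> \<le> K^2"
  proof (rule bound_int[OF Iw2])
    fix x :: real assume x: "x \<in> {0..1}"
    have "\<bar>w x\<bar>^2 \<le> K^2" by (rule power_mono[OF pt[OF x] abs_ge_zero])
    then show "\<bar>(w x)^2\<bar> \<le> K^2" by simp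
  qed
  finally have "sqrt (Lint 1 (\<lambda>x. (w x)^2)) \<le> sqrt (K^2)" by (rule real_sqrt_le_mono)
  then show ?thesis unfolding L2norm_def using K0 by simp
qed

lemma res0:
  fixes \<mu> :: real
  assumes mu: "\<mu> \<noteq> 0"
  shows "\<mu> \<in> resolvent_set 0"
proof -
  define C where "C = (1 + (1 + \<bar>\<mu>\<bar> * exp \<bar>\<mu>\<bar> * exp \<bar>\<mu>\<bar>) / \<bar>exp \<mu> - 1\<bar>) * (1 + \<bar>\<mu>\<bar> * exp \<bar>\<mu>\<bar> * exp \<bar>\<mu>\<bar>)"
  have C0: "0 \<le> C" unfolding C_def by (intro mult_nonneg_nonneg add_nonneg_nonneg) simp_all
  show ?thesis unfolding resolvent_set_def
  proof (intro CollectI conjI allI impI)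
    fix f :: "real \<Rightarrow> real" assume "L2 f" then show "\<exists>w d. res_eq 0 \<mu> w d f" by (rule exist0[OF mu])
  next
    fix w d assume sol: "res_eq 0 \<mu> w d (\<lambda>_. 0)"
    show "AE x in lebesgue_on {0..1}. w x = 0"
    proof (rule AE_I2)
      fix x :: real assume "x \<in> space (lebesgue_on {0..1})"
      then have x: "x \<in> {0..1}" by simp
      have "\<bar>w x\<bar> \<le> C * A1 (\<lambda>_. 0)" unfolding C_def by (rule C_bound[OF mu L2_zero sol x])
      then show "w x = 0" by simp
    qed
  next
    show "\<exists>C. \<forall>f w d. L2 f \<and> res_eq 0 \<mu> w d f \<longrightarrow> L2norm w \<le> C * L2norm f"
    proof (intro exI[of _ C] allI impI)
      fix f w d assume a: "L2 f \<and> res_eq 0 \<mu> w d f"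
      then have f: "L2 f" and sol: "res_eq 0 \<mu> w d f" by simp_all
      show "L2norm w \<le> C * L2norm f"
      proof (rule L2norm_pt[OF sol_cont[OF sol]])
        fix x :: real assume x: "x \<in> {0..1}"
        have "\<bar>w x\<bar> \<le> C * A1 f" unfolding C_def by (rule C_bound[OF mu f sol x])
        also have "\<dots> \<le> C * L2norm f" by (rule mult_left_mono[OF L1_le_L2[OF f] C0])
        finally show "\<bar>w x\<bar> \<le> C * L2norm f" .
      qed
    qed
  qed
qed

context
  fixes \<mu> :: real and f w :: "real \<Rightarrow> real" and d
  assumes mu: "\<mu> \<noteq> 0" and f: "L2 f" and sol: "res_eq 0 \<mu> w d f"
    and pos: "AE x in lebesgue_on {0..1}. f x \<ge> 0"
begin

lemma P_Fm: assumes "0 \<le> s" "s \<le> t" "t \<le> 1" shows "Lint s f \<le> Lint t f"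
proof (rule integral_mono_lebesgue_on_AE)
  show "integrable (lebesgue_on {0..t}) f" by (rule LI_sub[OF L2_int[OF f]]) (use assms in simp_all)
  show "AE x in lebesgue_on {0..t}. 0 \<le> f x" by (rule AE_sub[OF pos]) (use assms in simp_all)
  show "{0..s} \<subseteq> {0..t}" using assms by simp
qed simp_all

lemma P_psi: assumes y: "y \<in> {0..1}"
  shows "exp (-\<mu> * y) * w y = exp (-\<mu> * y) * (w 0 - Lint y f) + \<mu> * integral {0..y} (\<lambda>r. exp (-\<mu> * r) * (w 0 - Lint r f))"
proof -
  have "exp (-\<mu> * y) * w y = exp (-\<mu> * y) * (w 0 - Lint y f) + \<mu> * (exp (-\<mu> * y) * integral {0..y} w)"
    unfolding C_i[OF mu f sol y] by (simp add: algebra_simps)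
  then show ?thesis unfolding C_ii[OF mu f sol y] .
qed

lemma P_mono: assumes st: "0 \<le> s" "s \<le> t" "t \<le> 1"
  shows "exp (-\<mu> * t) * w t \<le> exp (-\<mu> * s) * w s"
proof -
  define \<phi> where "\<phi> = (\<lambda>r. w 0 - Lint r f)"
  define g where "g = (\<lambda>r. exp (-\<mu> * r) * \<phi> r)"
  have gc: "continuous_on {0..1} g" unfolding g_def \<phi>_def using C_cont_phi[OF mu f sol] by simp
  have gst: "g integrable_on {s..t}"
    by (rule integrable_continuous_interval, rule continuous_on_subset[OF gc]) (use st in auto)
  have g0t: "g integrable_on {0..t}"
    by (rule integrable_continuous_interval, rule continuous_on_subset[OF gc]) (use st in auto)
  have comb: "integral {0..s} g + integral {s..t} g = integral {0..t} g"
    by (rule Henstock_Kurzweil_Integration.integral_combine[OF st(1,2) g0t])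
  have s1: "s \<in> {0..1}" and t1: "t \<in> {0..1}" using st by auto
  have ps: "exp (-\<mu> * s) * w s = exp (-\<mu> * s) * \<phi> s + \<mu> * integral {0..s} g"
    using P_psi[OF s1] unfolding g_def \<phi>_def .
  have pt: "exp (-\<mu> * t) * w t = exp (-\<mu> * t) * \<phi> t + \<mu> * integral {0..t} g"
    using P_psi[OF t1] unfolding g_def \<phi>_def .
  have phim: "\<phi> r \<le> \<phi> r'" if "0 \<le> r'" "r' \<le> r" "r \<le> 1" for r r'
    unfolding \<phi>_def using P_Fm[OF that] by simp
  have ei: "integral {s..t} (\<lambda>r. c * exp (-\<mu> * r)) = c * ((exp (-\<mu> * s) - exp (-\<mu> * t)) / \<mu>)" for c
    using exp_int[OF mu st(2)] by simp
  have ci: "(\<lambda>r. c * exp (-\<mu> * r)) integrable_on {s..t}" for c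
    by (rule integrable_continuous_interval) (intro continuous_intros)
  have diff: "exp (-\<mu> * t) * w t - exp (-\<mu> * s) * w s = exp (-\<mu> * t) * \<phi> t - exp (-\<mu> * s) * \<phi> s + \<mu> * integral {s..t} g"
  proof -
    have "\<mu> * integral {0..t} g = \<mu> * integral {0..s} g + \<mu> * integral {s..t} g"
      unfolding comb[symmetric] by (simp add: distrib_left)
    then show ?thesis using ps pt by linarith
  qed
  show ?thesis
  proof (cases "\<mu> > 0")
    case True
    have "integral {s..t} g \<le> integral {s..t} (\<lambda>r. \<phi> s * exp (-\<mu> * r))"
    proof (rule integral_le[OF gst ci])
      fix r assume r: "r \<in> {s..t}"
      have "\<phi> r \<le> \<phi> s" by (rule phim) (use r st in auto)
      then show "g r \<le> \<phi> s * exp (-\<mu> * r)" unfolding g_def by (simp add: mult.commute)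
    qed
    note A = this[unfolded ei]
    have "\<mu> * integral {s..t} g \<le> \<mu> * (\<phi> s * ((exp (-\<mu> * s) - exp (-\<mu> * t)) / \<mu>))"
      by (rule mult_left_mono[OF A less_imp_le[OF True]])
    also have "\<dots> = \<phi> s * (exp (-\<mu> * s) - exp (-\<mu> * t))" using True by simp
    finally have I: "\<mu> * integral {s..t} g \<le> \<phi> s * (exp (-\<mu> * s) - exp (-\<mu> * t))" .
    have "\<phi> t \<le> \<phi> s" by (rule phim) (use st in auto)
    then have M: "exp (-\<mu> * t) * \<phi> t \<le> exp (-\<mu> * t) * \<phi> s" by (intro mult_left_mono) simp_all
    have E: "\<phi> s * (exp (-\<mu> * s) - exp (-\<mu> * t)) = exp (-\<mu> * s) * \<phi> s - exp (-\<mu> * t) * \<phi> s"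
      by (simp add: algebra_simps)
    show ?thesis using diff I M E by linarith
  next
    case False
    then have mneg: "\<mu> < 0" using mu by simp
    have "integral {s..t} (\<lambda>r. \<phi> t * exp (-\<mu> * r)) \<le> integral {s..t} g"
    proof (rule integral_le[OF ci gst])
      fix r assume r: "r \<in> {s..t}"
      have "\<phi> t \<le> \<phi> r" by (rule phim) (use r st in auto)
      then show "\<phi> t * exp (-\<mu> * r) \<le> g r" unfolding g_def by (simp add: mult.commute)
    qed
    note A = this[unfolded ei]
    have "\<mu> * integral {s..t} g \<le> \<mu> * (\<phi> t * ((exp (-\<mu> * s) - exp (-\<mu> * t)) / \<mu>))"
      by (rule mult_left_mono_neg[OF A less_imp_le[OF mneg]])
    also have "\<dots> = \<phi> t * (exp (-\<mu> * s) - exp (-\<mu> * t))" using mneg by simp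
    finally have I: "\<mu> * integral {s..t} g \<le> \<phi> t * (exp (-\<mu> * s) - exp (-\<mu> * t))" .
    have "\<phi> t \<le> \<phi> s" by (rule phim) (use st in auto)
    then have M: "exp (-\<mu> * s) * \<phi> t \<le> exp (-\<mu> * s) * \<phi> s" by (intro mult_left_mono) simp_all
    have E: "\<phi> t * (exp (-\<mu> * s) - exp (-\<mu> * t)) = exp (-\<mu> * s) * \<phi> t - exp (-\<mu> * t) * \<phi> t"
      by (simp add: algebra_simps)
    show ?thesis using diff I M E by linarith
  qed
qed

lemma P_gen: assumes st: "0 \<le> s" "s \<le> t" "t \<le> 1" shows "w t \<le> exp (\<mu> * (t - s)) * w s"
proof -
  have e1: "exp (\<mu> * t) * (exp (-\<mu> * t) * w t) = w t" by (simp add: exp_minus)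
  have e2: "exp (\<mu> * t) * exp (-\<mu> * s) = exp (\<mu> * (t - s))" by (simp add: exp_add[symmetric] algebra_simps)
  have "w t = exp (\<mu> * t) * (exp (-\<mu> * t) * w t)" using e1 by simp
  also have "\<dots> \<le> exp (\<mu> * t) * (exp (-\<mu> * s) * w s)" by (rule mult_left_mono[OF P_mono[OF st]]) simp
  also have "\<dots> = (exp (\<mu> * t) * exp (-\<mu> * s)) * w s" by (simp only: mult.assoc)
  also have "\<dots> = exp (\<mu> * (t - s)) * w s" unfolding e2 ..
  finally show ?thesis .
qed

end

context
  fixes \<mu> :: real and f w :: "real \<Rightarrow> real" and d
  assumes mu: "\<mu> \<noteq> 0" and f: "L2 f" and sol: "res_eq 0 \<mu> w d f"
    and pos: "AE x in lebesgue_on {0..1}. f x \<ge> 0"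
begin

lemma P_int: assumes H: "\<And>y. y \<in> {0..1} \<Longrightarrow> w y \<le> c * w x"
  shows "Lint 1 f / \<mu> \<le> c * w x"
proof -
  have Iw: "I01 w" by (rule cont_LI[OF sol_cont[OF sol]])
  have "Lint 1 w \<le> Lint 1 (\<lambda>y::real. c * w x)"
    by (rule Bochner_Integration.integral_mono[OF Iw I01_const]) (use H in simp)
  then show ?thesis using C_mean[OF mu f sol] by simp
qed

lemma P_int2: assumes H: "\<And>y. y \<in> {0..1} \<Longrightarrow> w x \<le> c * w y"
  shows "w x \<le> c * (Lint 1 f / \<mu>)"
proof -
  have Iw: "I01 w" by (rule cont_LI[OF sol_cont[OF sol]])
  have "Lint 1 (\<lambda>y::real. w x) \<le> Lint 1 (\<lambda>y. c * w y)"
    by (rule Bochner_Integration.integral_mono[OF I01_const integrable_mult_right[OF Iw]]) (use H in simp)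
  then show ?thesis using C_mean[OF mu f sol] by simp
qed

lemma P_pos: assumes mp: "\<mu> > 0" and x: "x \<in> {0..1}"
  shows "(1 / (\<mu> * exp (2*\<mu>))) * Lint 1 f \<le> w x"
proof -
  have per: "w 0 = w 1" by (rule sol0_facts(4)[OF sol])
  note G = P_gen[OF mu f sol pos]
  have w0: "0 \<le> w 0"
  proof -
    have "w 1 \<le> exp (\<mu> * (1 - 0)) * w 0" by (rule G) simp_all
    then have "w 0 \<le> exp \<mu> * w 0" using per by simp
    then have "0 \<le> (exp \<mu> - 1) * w 0" by (simp add: algebra_simps)
    moreover have "0 < exp \<mu> - 1" using mp by simp
    ultimately show ?thesis by (simp add: zero_le_mult_iff)
  qed
  have wy: "0 \<le> w y" if y: "y \<in> {0..1}" for y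
  proof -
    have "w 1 \<le> exp (\<mu> * (1 - y)) * w y" by (rule G) (use y in simp_all)
    then have "0 \<le> exp (\<mu> * (1 - y)) * w y" using per w0 by simp
    then show ?thesis by (simp add: zero_le_mult_iff)
  qed
  have H: "w y \<le> exp (2*\<mu>) * w x" if y: "y \<in> {0..1}" for y
  proof (cases "x \<le> y")
    case True
    have "w y \<le> exp (\<mu> * (y - x)) * w x" by (rule G) (use x y True in simp_all)
    also have "\<dots> \<le> exp (2*\<mu>) * w x"
    proof (rule mult_right_mono[OF _ wy[OF x]])
      have "\<mu> * (y - x) \<le> \<mu> * 1" using x y mp by (intro mult_left_mono) auto
      then show "exp (\<mu> * (y - x)) \<le> exp (2*\<mu>)" using mp by simp
    qed
    finally show ?thesis .
  next
    case False
    have a: "w y \<le> exp (\<mu> * (y - 0)) * w 0" by (rule G) (use y in simp_all)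
    have b: "w 1 \<le> exp (\<mu> * (1 - x)) * w x" by (rule G) (use x in simp_all)
    have a': "w y \<le> exp (\<mu> * y) * w 1" using a per by simp
    have "w y \<le> exp (\<mu> * y) * (exp (\<mu> * (1 - x)) * w x)"
      by (rule order_trans[OF a' mult_left_mono[OF b less_imp_le[OF exp_gt_zero]]])
    also have "\<dots> = exp (\<mu> * (y + 1 - x)) * w x"
    proof -
      have "exp (\<mu> * y) * exp (\<mu> * (1 - x)) = exp (\<mu> * (y + 1 - x))" by (simp add: exp_add[symmetric] algebra_simps)
      then show ?thesis by (simp only: mult.assoc[symmetric])
    qed
    also have "\<dots> \<le> exp (2*\<mu>) * w x"
    proof (rule mult_right_mono[OF _ wy[OF x]])
      have "\<mu> * (y + 1 - x) \<le> \<mu> * 2" using x y mp False by (intro mult_left_mono) auto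
      then show "exp (\<mu> * (y + 1 - x)) \<le> exp (2*\<mu>)" by (simp add: mult.commute)
    qed
    finally show ?thesis .
  qed
  have "Lint 1 f / \<mu> \<le> exp (2*\<mu>) * w x" by (rule P_int[OF H])
  then have "(Lint 1 f / \<mu>) / exp (2*\<mu>) \<le> (exp (2*\<mu>) * w x) / exp (2*\<mu>)"
    by (rule divide_right_mono) simp
  also have "(exp (2*\<mu>) * w x) / exp (2*\<mu>) = w x" by simp
  also have "(Lint 1 f / \<mu>) / exp (2*\<mu>) = (1 / (\<mu> * exp (2*\<mu>))) * Lint 1 f" by simp
  finally show ?thesis .
qed

lemma P_neg: assumes mn: "\<mu> < 0" and x: "x \<in> {0..1}"
  shows "(- \<mu> * exp (- 2*\<mu>)) * w x \<le> - Lint 1 f"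
proof -
  have per: "w 0 = w 1" by (rule sol0_facts(4)[OF sol])
  note G = P_gen[OF mu f sol pos]
  have w0: "w 0 \<le> 0"
  proof -
    have "w 1 \<le> exp (\<mu> * (1 - 0)) * w 0" by (rule G) simp_all
    then have "w 0 \<le> exp \<mu> * w 0" using per by simp
    then have "(1 - exp \<mu>) * w 0 \<le> 0" by (simp add: algebra_simps)
    moreover have "0 < 1 - exp \<mu>" using mn by simp
    ultimately show ?thesis by (simp add: mult_le_0_iff)
  qed
  have wy: "w y \<le> 0" if y: "y \<in> {0..1}" for y
  proof -
    have "w y \<le> exp (\<mu> * (y - 0)) * w 0" by (rule G) (use y in simp_all)
    also have "\<dots> \<le> 0" using w0 by (simp add: mult_le_0_iff)
    finally show ?thesis .
  qed
  have H: "w x \<le> exp (2*\<mu>) * w y" if y: "y \<in> {0..1}" for y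
  proof (cases "y \<le> x")
    case True
    have "w x \<le> exp (\<mu> * (x - y)) * w y" by (rule G) (use x y True in simp_all)
    also have "\<dots> \<le> exp (2*\<mu>) * w y"
    proof (rule mult_right_mono_neg[OF _ wy[OF y]])
      have "\<mu> * 2 \<le> \<mu> * (x - y)" using x y mn by (intro mult_left_mono_neg) auto
      then show "exp (2*\<mu>) \<le> exp (\<mu> * (x - y))" by (simp add: mult.commute)
    qed
    finally show ?thesis .
  next
    case False
    have a: "w x \<le> exp (\<mu> * (x - 0)) * w 0" by (rule G) (use x in simp_all)
    have b: "w 1 \<le> exp (\<mu> * (1 - y)) * w y" by (rule G) (use y in simp_all)
    have a': "w x \<le> exp (\<mu> * x) * w 1" using a per by simp
    have "w x \<le> exp (\<mu> * x) * (exp (\<mu> * (1 - y)) * w y)"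
      by (rule order_trans[OF a' mult_left_mono[OF b less_imp_le[OF exp_gt_zero]]])
    also have "\<dots> = exp (\<mu> * (x + 1 - y)) * w y"
    proof -
      have "exp (\<mu> * x) * exp (\<mu> * (1 - y)) = exp (\<mu> * (x + 1 - y))" by (simp add: exp_add[symmetric] algebra_simps)
      then show ?thesis by (simp only: mult.assoc[symmetric])
    qed
    also have "\<dots> \<le> exp (2*\<mu>) * w y"
    proof (rule mult_right_mono_neg[OF _ wy[OF y]])
      have "\<mu> * 2 \<le> \<mu> * (x + 1 - y)" using x y mn False by (intro mult_left_mono_neg) auto
      then show "exp (2*\<mu>) \<le> exp (\<mu> * (x + 1 - y))" by (simp add: mult.commute)
    qed
    finally show ?thesis .
  qed
  have I: "w x \<le> exp (2*\<mu>) * (Lint 1 f / \<mu>)" by (rule P_int2[OF H])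
  have c0: "0 \<le> - \<mu> * exp (- 2*\<mu>)" using mn by (intro mult_nonneg_nonneg) simp_all
  have "(- \<mu> * exp (- 2*\<mu>)) * w x \<le> (- \<mu> * exp (- 2*\<mu>)) * (exp (2*\<mu>) * (Lint 1 f / \<mu>))"
    by (rule mult_left_mono[OF I c0])
  also have "\<dots> = - Lint 1 f" using mn by (simp add: exp_minus field_simps)
  finally show ?thesis .
qed

end

lemma partC:
  "(\<forall>\<mu>>0. \<mu> \<in> resolvent_set 0 \<and> op_ge (Res 0 \<mu>) one_tensor_one)
 \<and> (\<forall>\<mu><0. \<mu> \<in> resolvent_set 0 \<and> op_ge (\<lambda>f x. - one_tensor_one f x) (Res 0 \<mu>))"
proof (intro conjI allI impI)
  fix \<mu> :: real assume mp: "\<mu> > 0"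
  then have mu: "\<mu> \<noteq> 0" by simp
  show "\<mu> \<in> resolvent_set 0" by (rule res0[OF mu])
  show "op_ge (Res 0 \<mu>) one_tensor_one"
  proof (rule op_pos_from[OF exist0[OF mu]])
    show "0 < 1 / (\<mu> * exp (2*\<mu>))" using mp by simp
    fix f w :: "real \<Rightarrow> real" and d and x :: real assume "L2 f" "AE x in lebesgue_on {0..1}. f x \<ge> 0" "res_eq 0 \<mu> w d f" "x \<in> {0..1}"
    then show "1 / (\<mu> * exp (2*\<mu>)) * Lint 1 f \<le> w x" using P_pos[OF mu] mp by blast
  qed
next
  fix \<mu> :: real assume mn: "\<mu> < 0"
  then have mu: "\<mu> \<noteq> 0" by simp
  show "\<mu> \<in> resolvent_set 0" by (rule res0[OF mu])
  show "op_ge (\<lambda>f x. - one_tensor_one f x) (Res 0 \<mu>)"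
  proof (rule op_neg_from[OF exist0[OF mu]])
    show "0 < - \<mu> * exp (- 2*\<mu>)" using mn by (intro mult_pos_pos) simp_all
    fix f w :: "real \<Rightarrow> real" and d and x :: real assume "L2 f" "AE x in lebesgue_on {0..1}. f x \<ge> 0" "res_eq 0 \<mu> w d f" "x \<in> {0..1}"
    then show "(- \<mu> * exp (- 2*\<mu>)) * w x \<le> - Lint 1 f" using P_neg[OF mu] mn by blast
  qed
qed

theorem theorem6p9:
  fixes l :: nat
  shows "(\<exists>\<epsilon>>0. \<forall>\<mu>\<in>{0<..<\<epsilon>}. \<mu> \<in> resolvent_set l \<and> op_ge (Res l \<mu>) one_tensor_one)
       \<and> (\<exists>\<epsilon>>0. \<forall>\<mu>\<in>{-\<epsilon><..<0}. \<mu> \<in> resolvent_set l \<and>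
              op_ge (\<lambda>f x. - one_tensor_one f x) (Res l \<mu>))
       \<and> (l = 0 \<longrightarrow>
            (\<forall>\<mu>>0. \<mu> \<in> resolvent_set l \<and> op_ge (Res l \<mu>) one_tensor_one)
          \<and> (\<forall>\<mu><0. \<mu> \<in> resolvent_set l \<and> op_ge (\<lambda>f x. - one_tensor_one f x) (Res l \<mu>)))"
  using partA[of l] partB[of l] partC by blast

end
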